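(* In the setting of the context, for every compact set $B\subset\mathrm{G}/\Gamma_i$ there exists $C<0$ such that whenever $k\in\mathrm{K}$, $a\in\mathrm{A}^+_{\mathrm{M}_{\mathscr{I}_0}}$, $b\in\mathrm{A}_{\mathscr{I}_0}$ and $\log a+\log b\notin\mathcal{C}_C$, the image of $kabG_{\mathrm{hor}}$ in $\mathrm{G}/\Gamma_i$ does not meet $B$.
   Context: $N\ge2$, $\mathrm{G}=\mathrm{SL}_N(\mathbb{R})$, $\mathrm{K}=\mathrm{SO}_N(\mathbb{R})$. $\mathscr{I}_0=\{I_1,\dots,I_{k_0}\}$: partition of $\{1,\dots,N\}$ into nonempty consecutive blocks; $i\sim j$ iff same block. $\mathrm{U}_{\mathscr{I}_0}:=\{g:(\mathrm{id}-g)\mathbb{R}^{I_k}\subset\mathbb{R}^{I_1\cup\dots\cup I_{k-1}}\forall k\}$, $G_{\mathrm{hor}}$ the stabilizer of $\mathrm{U}_{\mathscr{I}_0}\mathrm{K}/\mathrm{K}$ in $\mathrm{G}$. $\Gamma$: lattice commensurable with $\mathrm{SL}_N(\mathbb{Z})$, $\Gamma'\le\Gamma$ neat of finite index, $q_i\in\Gamma$, $\Gamma_i:=q_i^{-1}\Gamma'q_i$. $\mathrm{A}_{\mathscr{I}_0}$: positive diagonal determinant-1 matrices constant on blocks. $\mathrm{A}^+_{\mathrm{M}_{\mathscr{I}_0}}$: positive diagonal $a$ with $\prod_{i\in I_k}a_i=1$ for all $k$ and $a_i\ge a_j$ for $i<j$, $i\sim j$. For $C\in\mathbb{R}$, $\mathcal{C}_C$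 is the set of traceless real diagonal $\mathrm{diag}(x_1,\dots,x_N)$ with $x_i-x_j\ge\max\{0,C\}$ whenever $i<j$ lie in the same block, and $\sum_{i\in I_1\cup\dots\cup I_k}x_i\ge C$ for all $1\le k<k_0$. *)

theory Defs
  imports "HOL-Analysis.Analysis" "Jordan_Normal_Form.Determinant" "Jordan_Normal_Form.Char_Poly"
begin

definition SL :: "nat \<Rightarrow> real mat set" where
  "SL N = {g \<in> carrier_mat N N. det g = 1}"

definition SO :: "nat \<Rightarrow> real mat set" where
  "SO N = {g \<in> carrier_mat N N. g * transpose_mat g = 1\<^sub>m N \<and> det g = 1}"

definition SLZ :: "nat \<Rightarrow> real mat set" where
  "SLZ N = {g \<in> SL N. \<forall>i<N. \<forall>j<N. g $$ (i,j) \<in> \<int>}"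

definition mat_subgroup :: "nat \<Rightarrow> real mat set \<Rightarrow> bool" where
  "mat_subgroup N H \<longleftrightarrow> H \<subseteq> SL N \<and> 1\<^sub>m N \<in> H \<and>
     (\<forall>g\<in>H. \<forall>h\<in>H. g * h \<in> H) \<and> (\<forall>g\<in>H. \<exists>h\<in>H. g * h = 1\<^sub>m N \<and> h * g = 1\<^sub>m N)"

definition finite_index :: "real mat set \<Rightarrow> real mat set \<Rightarrow> bool" where
  "finite_index H L \<longleftrightarrow> H \<subseteq> L \<and> finite ((\<lambda>g. (\<lambda>h. g * h) ` H) ` L)"

definition commensurable :: "nat \<Rightarrow> real mat set \<Rightarrow> real mat set \<Rightarrow> bool" where
  "commensurable N H L \<longleftrightarrow> mat_subgroup N (H \<inter> L) \<and> finite_index (H \<inter> L) H \<and> finite_index (H \<inter> L) L"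

inductive_set gen_mult_group :: "complex set \<Rightarrow> complex set" for E where
  one: "1 \<in> gen_mult_group E"
| gen: "z \<in> E \<Longrightarrow> z \<in> gen_mult_group E"
| mult: "x \<in> gen_mult_group E \<Longrightarrow> y \<in> gen_mult_group E \<Longrightarrow> x * y \<in> gen_mult_group E"
| inv: "x \<in> gen_mult_group E \<Longrightarrow> inverse x \<in> gen_mult_group E"

definition complex_eigenvalues :: "real mat \<Rightarrow> complex set" where
  "complex_eigenvalues g = {z. eigenvalue (map_mat complex_of_real g) z}"

definition neat :: "real mat set \<Rightarrow> bool" where
  "neat H \<longleftrightarrow> (\<forall>g\<in>H. \<forall>z\<in>gen_mult_group (complex_eigenvalues g). \<forall>n::nat. n > 0 \<longrightarrow> z ^ n = 1 \<longrightarrow> z = 1)"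

definition blockstart :: "nat list \<Rightarrow> nat \<Rightarrow> nat" where
  "blockstart ns k = sum_list (take k ns)"

definition block :: "nat list \<Rightarrow> nat \<Rightarrow> nat set" where
  "block ns k = {blockstart ns k ..< blockstart ns (Suc k)}"

definition valid_blocks :: "nat \<Rightarrow> nat list \<Rightarrow> bool" where
  "valid_blocks N ns \<longleftrightarrow> ns \<noteq> [] \<and> (\<forall>n\<in>set ns. n > 0) \<and> sum_list ns = N"

definition same_block :: "nat list \<Rightarrow> nat \<Rightarrow> nat \<Rightarrow> bool" where
  "same_block ns i j \<longleftrightarrow> (\<exists>k<length ns. i \<in> block ns k \<and> j \<in> block ns k)"

text \<open>U: (id - g) maps R^{I_k} into R^{I_1 \<union> ... \<union> I_(k-1)} = vectors supported on {0..<blockstart k}.\<close>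
definition U_blk :: "nat \<Rightarrow> nat list \<Rightarrow> real mat set" where
  "U_blk N ns = {g \<in> SL N. \<forall>k<length ns. \<forall>v\<in>carrier_vec N.
      (\<forall>i<N. i \<notin> block ns k \<longrightarrow> v $ i = 0) \<longrightarrow>
      (\<forall>i<N. blockstart ns k \<le> i \<longrightarrow> (v - g *\<^sub>v v) $ i = 0)}"

text \<open>Stabilizer in G of U K / K \<subseteq> G/K (equivalently of the right-K-invariant set U K \<subseteq> G).\<close>
definition G_hor :: "nat \<Rightarrow> nat list \<Rightarrow> real mat set" where
  "G_hor N ns = (let UK = {u * k | u k. u \<in> U_blk N ns \<and> k \<in> SO N} in
     {g \<in> SL N. (\<lambda>x. g * x) ` UK = UK})"

definition pos_diag :: "nat \<Rightarrow> real mat \<Rightarrow> bool" where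
  "pos_diag N a \<longleftrightarrow> a \<in> carrier_mat N N \<and> diagonal_mat a \<and> (\<forall>i<N. a $$ (i,i) > 0)"

definition A_blk :: "nat \<Rightarrow> nat list \<Rightarrow> real mat set" where
  "A_blk N ns = {b. pos_diag N b \<and> det b = 1 \<and>
      (\<forall>i<N. \<forall>j<N. same_block ns i j \<longrightarrow> b $$ (i,i) = b $$ (j,j))}"

definition A_plus_M :: "nat \<Rightarrow> nat list \<Rightarrow> real mat set" where
  "A_plus_M N ns = {a. pos_diag N a \<and> (\<forall>k<length ns. (\<Prod>i\<in>block ns k. a $$ (i,i)) = 1) \<and>
      (\<forall>i<N. \<forall>j<N. i < j \<and> same_block ns i j \<longrightarrow> a $$ (i,i) \<ge> a $$ (j,j))}"

definition log_diag :: "nat \<Rightarrow> real mat \<Rightarrow> real mat" where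
  "log_diag N a = mat_diag N (\<lambda>i. ln (a $$ (i,i)))"

definition cone_C :: "nat \<Rightarrow> nat list \<Rightarrow> real \<Rightarrow> real mat set" where
  "cone_C N ns C = {x \<in> carrier_mat N N. diagonal_mat x \<and> (\<Sum>i<N. x $$ (i,i)) = 0 \<and>
      (\<forall>i<N. \<forall>j<N. i < j \<and> same_block ns i j \<longrightarrow> x $$ (i,i) - x $$ (j,j) \<ge> max 0 C) \<and>
      (\<forall>k. 1 \<le> k \<and> k < length ns \<longrightarrow> (\<Sum>i<blockstart ns k. x $$ (i,i)) \<ge> C)}"

definition entries :: "nat \<Rightarrow> real mat \<Rightarrow> nat \<times> nat \<Rightarrow> real" where
  "entries N g = (\<lambda>(i,j). if i < N \<and> j < N then g $$ (i,j) else 0)"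

definition G_top :: "nat \<Rightarrow> real mat topology" where
  "G_top N = pullback_topology (SL N) (entries N) (product_topology (\<lambda>_. euclideanreal) UNIV)"

definition lcoset :: "real mat set \<Rightarrow> real mat \<Rightarrow> real mat set" where
  "lcoset H g = (\<lambda>h. g * h) ` H"

definition quot_top :: "'a topology \<Rightarrow> ('a \<Rightarrow> 'b) \<Rightarrow> 'b topology" where
  "quot_top X f = topology (\<lambda>U. U \<subseteq> f ` topspace X \<and> openin X {x \<in> topspace X. f x \<in> U})"

lemma istopology_quot_top:
  "istopology (\<lambda>U. U \<subseteq> f ` topspace X \<and> openin X {x \<in> topspace X. f x \<in> U})"
  unfolding istopology_def
proof (rule conjI; intro allI impI)
  fix S T assume a: "S \<subseteq> f ` topspace X \<and> openin X {x \<in> topspace X. f x \<in> S}"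
     "T \<subseteq> f ` topspace X \<and> openin X {x \<in> topspace X. f x \<in> T}"
  have "{x \<in> topspace X. f x \<in> S \<inter> T} = {x \<in> topspace X. f x \<in> S} \<inter> {x \<in> topspace X. f x \<in> T}" by auto
  with a show "S \<inter> T \<subseteq> f ` topspace X \<and> openin X {x \<in> topspace X. f x \<in> S \<inter> T}" by (auto intro: openin_Int)
next
  fix K assume a: "\<forall>S\<in>K. S \<subseteq> f ` topspace X \<and> openin X {x \<in> topspace X. f x \<in> S}"
  have "{x \<in> topspace X. f x \<in> \<Union>K} = (\<Union>S\<in>K. {x \<in> topspace X. f x \<in> S})" by auto
  with a show "\<Union>K \<subseteq> f ` topspace X \<and> openin X {x \<in> topspace X. f x \<in> \<Union>K}" by (auto intro!: openin_Union)
qed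

definition quotient_space :: "nat \<Rightarrow> real mat set \<Rightarrow> real mat set topology" where
  "quotient_space N \<Gamma> = quot_top (G_top N) (lcoset \<Gamma>)"

end

theory Submission
  imports Defs
begin

lemma mult_entry:
  assumes "A \<in> carrier_mat n k" "B \<in> carrier_mat k m" "i < n" "j < m"
  shows "(A * B) $$ (i,j) = (\<Sum>l<k. A $$ (i,l) * B $$ (l,j))"
  using assms by (simp add: scalar_prod_def atLeast0LessThan)

definition dotv :: "nat \<Rightarrow> (nat \<Rightarrow> real) \<Rightarrow> (nat \<Rightarrow> real) \<Rightarrow> real" where
  "dotv n v w = (\<Sum>i<n. v i * w i)"

definition gram :: "nat \<Rightarrow> nat \<Rightarrow> (nat \<Rightarrow> nat \<Rightarrow> real) \<Rightarrow> real mat" where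
  "gram n d vs = mat d d (\<lambda>(a,b). dotv n (vs a) (vs b))"

definition gramdet :: "nat \<Rightarrow> nat \<Rightarrow> (nat \<Rightarrow> nat \<Rightarrow> real) \<Rightarrow> real" where
  "gramdet n d vs = det (gram n d vs)"

lemma dotv_cong: "(\<And>i. i < n \<Longrightarrow> v i = v' i) \<Longrightarrow> (\<And>i. i < n \<Longrightarrow> w i = w' i) \<Longrightarrow> dotv n v w = dotv n v' w'"
  unfolding dotv_def by (rule sum.cong) auto

lemma gramdet_cong:
  assumes "\<And>a i. a < d \<Longrightarrow> i < n \<Longrightarrow> vs a i = vs' a i"
  shows "gramdet n d vs = gramdet n d vs'"
proof -
  have "gram n d vs = gram n d vs'"
    unfolding gram_def by (rule eq_matI) (auto intro!: dotv_cong assms)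
  thus ?thesis unfolding gramdet_def by simp
qed

lemma dotv_comm: "dotv n v w = dotv n w v"
  unfolding dotv_def by (simp add: mult.commute)

lemma dotv_nonneg: "dotv n v v \<ge> 0"
  unfolding dotv_def by (auto intro: sum_nonneg)

lemma dotv_zero_iff: "dotv n v v = 0 \<longleftrightarrow> (\<forall>i<n. v i = 0)"
  unfolding dotv_def by (subst sum_nonneg_eq_0_iff) auto

lemma dotv_sum_left: "dotv n (\<lambda>i. \<Sum>p\<in>P. c p * w p i) v = (\<Sum>p\<in>P. c p * dotv n (w p) v)"
proof -
  have "dotv n (\<lambda>i. \<Sum>p\<in>P. c p * w p i) v = (\<Sum>i<n. \<Sum>p\<in>P. c p * w p i * v i)"
    unfolding dotv_def by (simp add: sum_distrib_right)
  also have "\<dots> = (\<Sum>p\<in>P. \<Sum>i<n. c p * w p i * v i)" by (rule sum.swap)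
  also have "\<dots> = (\<Sum>p\<in>P. c p * dotv n (w p) v)"
    unfolding dotv_def by (simp add: sum_distrib_left mult.assoc)
  finally show ?thesis .
qed

lemma dotv_sum_right: "dotv n v (\<lambda>i. \<Sum>p\<in>P. c p * w p i) = (\<Sum>p\<in>P. c p * dotv n v (w p))"
  using dotv_sum_left[of n c w P v] by (simp add: dotv_comm)

lemma dotv_diff_left: "dotv n (\<lambda>i. v i - w i) u = dotv n v u - dotv n w u"
  unfolding dotv_def by (simp add: algebra_simps sum_subtractf)
lemma dotv_add_left: "dotv n (\<lambda>i. v i + w i) u = dotv n v u + dotv n w u"
  unfolding dotv_def by (simp add: algebra_simps sum.distrib)
lemma dotv_diff_right: "dotv n u (\<lambda>i. v i - w i) = dotv n u v - dotv n u w"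
  unfolding dotv_def by (simp add: algebra_simps sum_subtractf)
lemma dotv_add_right: "dotv n u (\<lambda>i. v i + w i) = dotv n u v + dotv n u w"
  unfolding dotv_def by (simp add: algebra_simps sum.distrib)
lemma dotv_scale_left: "dotv n (\<lambda>i. c * v i) u = c * dotv n v u"
  unfolding dotv_def by (simp add: sum_distrib_left mult.assoc)
lemma dotv_scale_right: "dotv n u (\<lambda>i. c * v i) = c * dotv n u v"
  unfolding dotv_def by (simp add: sum_distrib_left algebra_simps)

lemma gram_carrier[simp]: "gram n d vs \<in> carrier_mat d d"
  unfolding gram_def by simp

lemma gramdet_lin:
  assumes T: "T \<in> carrier_mat d d"
  shows "gramdet n d (\<lambda>a i. \<Sum>b<d. T $$ (b,a) * vs b i) = det T ^ 2 * gramdet n d vs"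
proof -
  let ?G = "gram n d vs"
  have "gram n d (\<lambda>a i. \<Sum>b<d. T $$ (b,a) * vs b i) = transpose_mat T * ?G * T"
  proof (rule eq_matI)
    fix a a' assume a: "a < dim_row (transpose_mat T * ?G * T)" and a': "a' < dim_col (transpose_mat T * ?G * T)"
    hence aa: "a < d" "a' < d" using T by auto
    have "(transpose_mat T * ?G * T) $$ (a,a') = (\<Sum>l<d. (transpose_mat T * ?G) $$ (a,l) * T $$ (l,a'))"
      by (rule mult_entry[of _ d d]) (use T aa in auto)
    also have "\<dots> = (\<Sum>l<d. (\<Sum>b<d. T $$ (b,a) * dotv n (vs b) (vs l)) * T $$ (l,a'))"
      apply (rule sum.cong, simp)
      apply (subst mult_entry[of _ d d]) using T aa by (auto simp: gram_def)
    also have "\<dots> = (\<Sum>l<d. \<Sum>b<d. T $$ (b,a) * dotv n (vs b) (vs l) * T $$ (l,a'))"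
      by (simp add: sum_distrib_right)
    also have "\<dots> = (\<Sum>b<d. \<Sum>l<d. T $$ (b,a) * dotv n (vs b) (vs l) * T $$ (l,a'))"
      by (rule sum.swap)
    also have "\<dots> = (\<Sum>b<d. T $$ (b,a) * (\<Sum>l<d. T $$ (l,a') * dotv n (vs b) (vs l)))"
      by (simp add: sum_distrib_left mult.commute mult.left_commute)
    also have "\<dots> = dotv n (\<lambda>i. \<Sum>b<d. T $$ (b,a) * vs b i) (\<lambda>i. \<Sum>b<d. T $$ (b,a') * vs b i)"
      by (simp add: dotv_sum_left dotv_sum_right)
    finally show "gram n d (\<lambda>a i. \<Sum>b<d. T $$ (b,a) * vs b i) $$ (a,a') = (transpose_mat T * ?G * T) $$ (a,a')"
      using aa by (simp add: gram_def)
  next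
    show "dim_row (gram n d (\<lambda>a i. \<Sum>b<d. T $$ (b,a) * vs b i)) = dim_row (transpose_mat T * ?G * T)"
      using T by (simp add: gram_def)
  next
    show "dim_col (gram n d (\<lambda>a i. \<Sum>b<d. T $$ (b,a) * vs b i)) = dim_col (transpose_mat T * ?G * T)"
      using T by (simp add: gram_def)
  qed
  hence "gramdet n d (\<lambda>a i. \<Sum>b<d. T $$ (b,a) * vs b i) = det (transpose_mat T * ?G * T)"
    unfolding gramdet_def by simp
  also have "\<dots> = det T * gramdet n d vs * det T"
  proof -
    have TT: "transpose_mat T \<in> carrier_mat d d" using T by simp
    have "det (transpose_mat T * ?G * T) = det (transpose_mat T * ?G) * det T"
      by (rule det_mult[of _ d]) (use T TT in auto)
    also have "det (transpose_mat T * ?G) = det (transpose_mat T) * det ?G"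
      by (rule det_mult[of _ d]) (use TT in auto)
    finally show ?thesis using det_transpose[OF T] unfolding gramdet_def by simp
  qed
  finally show ?thesis by (simp add: power2_eq_square)
qed


fun gs :: "nat \<Rightarrow> (nat \<Rightarrow> nat \<Rightarrow> real) \<Rightarrow> nat \<Rightarrow> nat \<Rightarrow> real" where
 "gs n vs l = (\<lambda>i. vs l i - (\<Sum>p<l. (dotv n (vs l) (gs n vs p) / dotv n (gs n vs p) (gs n vs p)) * gs n vs p i))"

declare gs.simps[simp del]

definition lspan :: "(nat \<Rightarrow> nat \<Rightarrow> real) \<Rightarrow> nat \<Rightarrow> (nat \<Rightarrow> real) \<Rightarrow> bool" where
  "lspan F l w \<longleftrightarrow> (\<exists>c. w = (\<lambda>i. \<Sum>p<l. c p * F p i))"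

lemma lspanI: "w = (\<lambda>i. \<Sum>p<l. c p * F p i) \<Longrightarrow> lspan F l w"
  unfolding lspan_def by blast

lemma lspan_zero: "lspan F l (\<lambda>i. 0)"
  unfolding lspan_def by (rule exI[of _ "\<lambda>_. 0"]) simp

lemma lspan_mono: assumes "l \<le> l'" "lspan F l w" shows "lspan F l' w"
proof -
  from assms(2) obtain c where c: "w = (\<lambda>i. \<Sum>p<l. c p * F p i)" unfolding lspan_def by blast
  have "w = (\<lambda>i. \<Sum>p<l'. (if p < l then c p else 0) * F p i)"
  proof
    fix i
    have "(\<Sum>p<l'. (if p < l then c p else 0) * F p i) = (\<Sum>p<l. (if p < l then c p else 0) * F p i)"
      by (rule sum.mono_neutral_right) (use assms(1) in auto)
    thus "w i = (\<Sum>p<l'. (if p < l then c p else 0) * F p i)" using c by simp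
  qed
  thus ?thesis by (rule lspanI)
qed

lemma lspan_gen: assumes "p < l" shows "lspan F l (F p)"
proof -
  have "F p = (\<lambda>i. \<Sum>p'<l. (if p' = p then 1 else 0) * F p' i)"
  proof
    fix i
    have "(\<Sum>p'<l. (if p' = p then 1 else 0) * F p' i) = (\<Sum>p'<l. if p' = p then F p' i else 0)"
      by (rule sum.cong) auto
    also have "\<dots> = F p i" using assms by (simp add: sum.delta')
    finally show "F p i = (\<Sum>p'<l. (if p' = p then 1 else 0) * F p' i)" by simp
  qed
  thus ?thesis unfolding lspan_def by (intro exI[of _ "\<lambda>p'. if p' = p then (1::real) else 0"]) simp
qed

lemma lspan_add: assumes "lspan F l v" "lspan F l w" shows "lspan F l (\<lambda>i. v i + w i)"
proof -
  from assms obtain c d where "v = (\<lambda>i. \<Sum>p<l. c p * F p i)" "w = (\<lambda>i. \<Sum>p<l. d p * F p i)"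
    unfolding lspan_def by blast
  hence "(\<lambda>i. v i + w i) = (\<lambda>i. \<Sum>p<l. (c p + d p) * F p i)"
    by (simp add: sum.distrib algebra_simps)
  thus ?thesis by (rule lspanI)
qed

lemma lspan_scale: assumes "lspan F l v" shows "lspan F l (\<lambda>i. a * v i)"
proof -
  from assms obtain c where "v = (\<lambda>i. \<Sum>p<l. c p * F p i)" unfolding lspan_def by blast
  hence "(\<lambda>i. a * v i) = (\<lambda>i. \<Sum>p<l. (a * c p) * F p i)"
    by (simp add: sum_distrib_left mult.assoc)
  thus ?thesis by (rule lspanI)
qed

lemma lspan_diff: assumes "lspan F l v" "lspan F l w" shows "lspan F l (\<lambda>i. v i - w i)"
proof -
  have "lspan F l (\<lambda>i. v i + (-1) * w i)" by (rule lspan_add[OF assms(1) lspan_scale[OF assms(2)]])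
  thus ?thesis by simp
qed

lemma lspan_sum: fixes k :: nat assumes "\<And>p. p < k \<Longrightarrow> lspan F l (W p)"
  shows "lspan F l (\<lambda>i. \<Sum>p<k. d p * W p i)"
  using assms
proof (induction k)
  case 0 thus ?case using lspan_zero by simp
next
  case (Suc k)
  have "lspan F l (\<lambda>i. (\<Sum>p<k. d p * W p i) + d k * W k i)"
    by (rule lspan_add[OF Suc.IH lspan_scale]) (use Suc.prems in auto)
  thus ?case by simp
qed

lemma lspan_trans: assumes "\<And>p. p < l \<Longrightarrow> lspan G k (F p)" "lspan F l w" shows "lspan G k w"
proof -
  from assms(2) obtain c where c: "w = (\<lambda>i. \<Sum>p<l. c p * F p i)" unfolding lspan_def by blast
  show ?thesis unfolding c by (rule lspan_sum) (use assms(1) in auto)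
qed

context fixes n :: nat and vs :: "nat \<Rightarrow> nat \<Rightarrow> real"
begin

abbreviation "q \<equiv> gs n vs"
definition "mu l p = dotv n (vs l) (q p) / dotv n (q p) (q p)"

lemma gs_eq: "q l = (\<lambda>i. vs l i - (\<Sum>p<l. mu l p * q p i))"
  by (subst gs.simps) (simp add: mu_def)

lemma gs_decomp: "vs l i = q l i + (\<Sum>p<l. mu l p * q p i)"
  using fun_cong[OF gs_eq[of l], of i] by simp

lemma gs_orth_all: "\<forall>p<l. dotv n (q l) (q p) = 0"
proof (induction l rule: less_induct)
  case (less l)
  show ?case
  proof (intro allI impI)
  fix p assume lp: "p < l"
  have orth: "dotv n (q p') (q p) = 0" if "p' < l" "p' \<noteq> p" for p'
  proof (cases "p' < p")
    case True thus ?thesis using less.IH[OF lp] True by (simp add: dotv_comm)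
  next
    case False hence "p < p'" using that by auto
    thus ?thesis using less.IH[OF that(1)] by simp
  qed
  have "dotv n (q l) (q p) = dotv n (vs l) (q p) - (\<Sum>p'<l. mu l p' * dotv n (q p') (q p))"
    by (subst gs_eq) (simp add: dotv_diff_left dotv_sum_left)
  also have "(\<Sum>p'<l. mu l p' * dotv n (q p') (q p)) = mu l p * dotv n (q p) (q p)"
  proof -
    have "(\<Sum>p'<l. mu l p' * dotv n (q p') (q p)) = mu l p * dotv n (q p) (q p) + (\<Sum>p'\<in>{..<l}-{p}. mu l p' * dotv n (q p') (q p))"
      by (rule sum.remove) (use lp in auto)
    also have "(\<Sum>p'\<in>{..<l}-{p}. mu l p' * dotv n (q p') (q p)) = 0"
      by (rule sum.neutral) (use orth in auto)
    finally show ?thesis by simp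
  qed
  also have "mu l p * dotv n (q p) (q p) = dotv n (vs l) (q p)"
  proof (cases "dotv n (q p) (q p) = 0")
    case True
    hence "\<forall>i<n. q p i = 0" by (simp add: dotv_zero_iff)
    hence "dotv n (vs l) (q p) = 0" unfolding dotv_def by simp
    thus ?thesis using True by simp
  next
    case False thus ?thesis by (simp add: mu_def)
  qed
  finally show "dotv n (q l) (q p) = 0" by simp
  qed
qed

lemma gs_orth: "p < l \<Longrightarrow> dotv n (q l) (q p) = 0"
  using gs_orth_all by blast

lemma gs_orth2: "p < d \<Longrightarrow> l < d \<Longrightarrow> p \<noteq> l \<Longrightarrow> dotv n (q l) (q p) = 0"
  using gs_orth[of p l] gs_orth[of l p] by (cases "p < l") (auto simp: dotv_comm)

lemma vs_minus_gs_qspan: "lspan q l (\<lambda>i. vs l i - q l i)"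
proof -
  have "(\<lambda>i. vs l i - q l i) = (\<lambda>i. \<Sum>p<l. mu l p * q p i)"
    using gs_decomp by (auto simp: fun_eq_iff)
  thus ?thesis unfolding lspan_def by blast
qed

lemma vs_qspan: "p < l \<Longrightarrow> lspan q l (vs p)"
proof -
  assume pl: "p < l"
  have "lspan q l (\<lambda>i. q p i + (vs p i - q p i))"
    by (rule lspan_add[OF lspan_gen[OF pl] lspan_mono[OF _ vs_minus_gs_qspan]]) (use pl in auto)
  thus ?thesis by simp
qed

lemma vs_minus_gs_vspan: "lspan vs l (\<lambda>i. vs l i - q l i)"
proof (induction l rule: less_induct)
  case (less l)
  have qp: "lspan vs l (q p)" if "p < l" for p
  proof -
    have "lspan vs l (\<lambda>i. vs p i - (vs p i - q p i))"
      by (rule lspan_diff[OF lspan_gen[OF that] lspan_mono[OF _ less.IH[OF that]]]) (use that in auto)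
    thus ?thesis by simp
  qed
  have "(\<lambda>i. vs l i - q l i) = (\<lambda>i. \<Sum>p<l. mu l p * q p i)"
    using gs_decomp by (auto simp: fun_eq_iff)
  thus ?case using lspan_sum[of l vs l q "mu l", OF qp] by simp
qed

lemma gs_min:
  assumes "lspan vs l y"
  shows "dotv n (\<lambda>i. vs l i - y i) (\<lambda>i. vs l i - y i) \<ge> dotv n (q l) (q l)"
proof -
  have yq: "lspan q l y" by (rule lspan_trans[OF vs_qspan assms])
  define z where "z = (\<lambda>i. (vs l i - q l i) - y i)"
  have zq: "lspan q l z" unfolding z_def by (rule lspan_diff[OF vs_minus_gs_qspan yq])
  then obtain c where c: "z = (\<lambda>i. \<Sum>p<l. c p * q p i)" unfolding lspan_def by blast
  have "dotv n (q l) z = 0"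
    unfolding c dotv_sum_right using gs_orth by simp
  hence z0: "dotv n z (q l) = 0" by (simp add: dotv_comm)
  have e: "(\<lambda>i. vs l i - y i) = (\<lambda>i. q l i + z i)" unfolding z_def by auto
  have "dotv n (\<lambda>i. q l i + z i) (\<lambda>i. q l i + z i) = dotv n (q l) (q l) + 2 * dotv n (q l) z + dotv n z z"
    by (simp add: dotv_add_left dotv_add_right dotv_comm[of n z "q l"])
  thus ?thesis unfolding e using dotv_nonneg[of n z] \<open>dotv n (q l) z = 0\<close> by simp
qed

definition Smat :: "nat \<Rightarrow> real mat" where
  "Smat d = mat d d (\<lambda>(b,a). if b = a then 1 else if b < a then mu a b else 0)"

lemma gramdet_gs: "gramdet n d vs = (\<Prod>l<d. dotv n (q l) (q l))"
proof -
  have S: "Smat d \<in> carrier_mat d d" unfolding Smat_def by simp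
  have "gramdet n d vs = gramdet n d (\<lambda>a i. \<Sum>b<d. Smat d $$ (b,a) * q b i)"
  proof (rule gramdet_cong)
    fix a i assume a: "a < d" and i: "i < n"
    let ?f = "\<lambda>b. Smat d $$ (b,a) * q b i"
    have "(\<Sum>b<d. ?f b) = (\<Sum>b<Suc a. ?f b)"
      by (rule sum.mono_neutral_right) (use a in \<open>auto simp: Smat_def\<close>)
    also have "\<dots> = q a i + (\<Sum>b<a. mu a b * q b i)"
      using a by (simp add: Smat_def)
    finally show "vs a i = (\<Sum>b<d. ?f b)" using gs_decomp by simp
  qed
  also have "\<dots> = det (Smat d) ^ 2 * gramdet n d q" by (rule gramdet_lin[OF S])
  also have "det (Smat d) = 1"
  proof -
    have "det (Smat d) = prod_list (diag_mat (Smat d))"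
      by (rule det_upper_triangular[OF _ S]) (auto simp: upper_triangular_def Smat_def)
    also have "\<dots> = 1" unfolding prod_list_diag_prod using S by (simp add: Smat_def)
    finally show ?thesis .
  qed
  also have "gramdet n d q = (\<Prod>l<d. dotv n (q l) (q l))"
  proof -
    have G: "gram n d q \<in> carrier_mat d d" by simp
    have "det (gram n d q) = prod_list (diag_mat (gram n d q))"
      by (rule det_upper_triangular[OF _ G]) (auto simp: upper_triangular_def gram_def gs_orth)
    also have "\<dots> = (\<Prod>l<d. dotv n (q l) (q l))" unfolding prod_list_diag_prod
      by (simp add: gram_def atLeast0LessThan)
    finally show ?thesis unfolding gramdet_def .
  qed
  finally show ?thesis by simp
qed

lemma gramdet_nonneg: "gramdet n d vs \<ge> 0"
  unfolding gramdet_gs by (rule prod_nonneg) (simp add: dotv_nonneg)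

end

definition ymap :: "nat \<Rightarrow> (nat \<Rightarrow> nat \<Rightarrow> real) \<Rightarrow> (nat \<Rightarrow> real) \<Rightarrow> nat \<Rightarrow> real" where
  "ymap n Y w = (\<lambda>i. \<Sum>j<n. Y i j * w j)"


lemma lspan_ymap: assumes "lspan (\<lambda>a. ymap n Y (vs a)) l y" shows "\<exists>y'. lspan vs l y' \<and> y = ymap n Y y'"
proof -
  from assms obtain c where c: "y = (\<lambda>i. \<Sum>p<l. c p * ymap n Y (vs p) i)" unfolding lspan_def by blast
  let ?y' = "\<lambda>j. \<Sum>p<l. c p * vs p j"
  have "y = ymap n Y ?y'"
  proof
    fix i
    have "y i = (\<Sum>p<l. \<Sum>j<n. c p * (Y i j * vs p j))"
      unfolding c ymap_def by (simp add: sum_distrib_left)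
    also have "\<dots> = (\<Sum>j<n. \<Sum>p<l. c p * (Y i j * vs p j))" by (rule sum.swap)
    also have "\<dots> = ymap n Y ?y' i"
      unfolding ymap_def by (simp add: sum_distrib_left mult.left_commute)
    finally show "y i = ymap n Y ?y' i" .
  qed
  moreover have "lspan vs l ?y'" unfolding lspan_def by blast
  ultimately show ?thesis by blast
qed

lemma ymap_diff: "ymap n Y (\<lambda>i. v i - w i) = (\<lambda>i. ymap n Y v i - ymap n Y w i)"
  unfolding ymap_def by (simp add: algebra_simps sum_subtractf)

lemma gramdet_ymap:
  assumes s: "\<sigma> \<ge> 0" and Y: "\<And>w. dotv n (ymap n Y w) (ymap n Y w) \<ge> \<sigma> * dotv n w w"
  shows "gramdet n d (\<lambda>a. ymap n Y (vs a)) \<ge> \<sigma> ^ d * gramdet n d vs"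
proof -
  let ?vs' = "\<lambda>a. ymap n Y (vs a)"
  have each: "dotv n (gs n ?vs' l) (gs n ?vs' l) \<ge> \<sigma> * dotv n (gs n vs l) (gs n vs l)" for l
  proof -
    have "lspan ?vs' l (\<lambda>i. ?vs' l i - gs n ?vs' l i)" by (rule vs_minus_gs_vspan)
    then obtain y' where y': "lspan vs l y'" "(\<lambda>i. ?vs' l i - gs n ?vs' l i) = ymap n Y y'"
      using lspan_ymap by blast
    have pw: "\<And>i. ymap n Y y' i = ?vs' l i - gs n ?vs' l i" using y'(2) by (simp add: fun_eq_iff)
    have e: "gs n ?vs' l = ymap n Y (\<lambda>i. vs l i - y' i)" by (simp add: fun_eq_iff ymap_diff pw)
    have "\<sigma> * dotv n (gs n vs l) (gs n vs l) \<le> \<sigma> * dotv n (\<lambda>i. vs l i - y' i) (\<lambda>i. vs l i - y' i)"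
      by (rule mult_left_mono[OF gs_min[OF y'(1)] s])
    also have "\<dots> \<le> dotv n (gs n ?vs' l) (gs n ?vs' l)" unfolding e by (rule Y)
    finally show ?thesis .
  qed
  have "\<sigma> ^ d * gramdet n d vs = (\<Prod>l<d. \<sigma> * dotv n (gs n vs l) (gs n vs l))"
    by (simp add: gramdet_gs prod.distrib)
  also have "\<dots> \<le> (\<Prod>l<d. dotv n (gs n ?vs' l) (gs n ?vs' l))"
    by (rule prod_mono) (use each s in \<open>auto intro: mult_nonneg_nonneg dotv_nonneg\<close>)
  also have "\<dots> = gramdet n d ?vs'" by (simp add: gramdet_gs)
  finally show ?thesis .
qed


definition colsv :: "real mat \<Rightarrow> nat \<Rightarrow> nat \<Rightarrow> real" where "colsv g = (\<lambda>l i. g $$ (i,l))"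
definition psi :: "nat \<Rightarrow> nat \<Rightarrow> real mat \<Rightarrow> real" where "psi N m g = gramdet N m (colsv g)"
definition rowsv :: "nat \<Rightarrow> real mat \<Rightarrow> nat \<Rightarrow> nat \<Rightarrow> real" where "rowsv m g = (\<lambda>r c. g $$ (m+r, c))"
definition rho :: "nat \<Rightarrow> nat \<Rightarrow> real mat \<Rightarrow> real" where "rho N m g = gramdet N (N-m) (rowsv m g)"

lemma gramdet_dot_cong:
  assumes "\<And>a b. a < d \<Longrightarrow> b < d \<Longrightarrow> dotv n (vs a) (vs b) = dotv n' (ws a) (ws b)"
  shows "gramdet n d vs = gramdet n' d ws"
proof -
  have "gram n d vs = gram n' d ws" unfolding gram_def by (rule eq_matI) (auto simp: assms)
  thus ?thesis unfolding gramdet_def by simp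
qed

lemma gramdet_orthonormal:
  assumes "\<And>a b. a < d \<Longrightarrow> b < d \<Longrightarrow> dotv n (vs a) (vs b) = (if a = b then 1 else 0)"
  shows "gramdet n d vs = 1"
proof -
  have "gram n d vs = 1\<^sub>m d" unfolding gram_def by (rule eq_matI) (auto simp: assms)
  thus ?thesis unfolding gramdet_def by simp
qed

lemma ymap_orth:
  assumes Y: "\<And>a b. a < n \<Longrightarrow> b < n \<Longrightarrow> (\<Sum>i<n. Y i a * Y i b) = (if a = b then 1 else 0)"
  shows "dotv n (ymap n Y x) (ymap n Y y) = dotv n x y"
proof -
  have "dotv n (ymap n Y x) (ymap n Y y) = (\<Sum>i<n. \<Sum>a<n. \<Sum>b<n. x a * y b * (Y i a * Y i b))"
    unfolding dotv_def ymap_def sum_product by (intro sum.cong refl) (simp add: mult_ac)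
  also have "\<dots> = (\<Sum>a<n. \<Sum>i<n. \<Sum>b<n. x a * y b * (Y i a * Y i b))" by (rule sum.swap)
  also have "\<dots> = (\<Sum>a<n. \<Sum>b<n. \<Sum>i<n. x a * y b * (Y i a * Y i b))"
    by (rule sum.cong[OF refl], rule sum.swap)
  also have "\<dots> = (\<Sum>a<n. \<Sum>b<n. x a * y b * (if a = b then 1 else 0))"
    by (intro sum.cong refl) (simp add: sum_distrib_left[symmetric] Y)
  also have "\<dots> = (\<Sum>a<n. x a * y a)"
    by (intro sum.cong refl) (simp add: if_distrib cong: if_cong)
  finally show ?thesis unfolding dotv_def .
qed

lemma SO_carrier: "k \<in> SO N \<Longrightarrow> k \<in> carrier_mat N N" unfolding SO_def by auto

lemma SO_rows: assumes "k \<in> SO N" "a < N" "b < N"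
  shows "(\<Sum>i<N. k $$ (a,i) * k $$ (b,i)) = (if a = b then 1 else 0)"
proof -
  have k: "k \<in> carrier_mat N N" "k * transpose_mat k = 1\<^sub>m N" using assms(1) unfolding SO_def by auto
  have "(k * transpose_mat k) $$ (a,b) = (\<Sum>i<N. k $$ (a,i) * k $$ (b,i))"
    by (subst mult_entry[of _ N N]) (use k assms in auto)
  thus ?thesis using k assms by simp
qed

lemma SO_cols: assumes "k \<in> SO N" "a < N" "b < N"
  shows "(\<Sum>i<N. k $$ (i,a) * k $$ (i,b)) = (if a = b then 1 else 0)"
proof -
  have k: "k \<in> carrier_mat N N" "k * transpose_mat k = 1\<^sub>m N" using assms(1) unfolding SO_def by auto
  have kt: "transpose_mat k * k = 1\<^sub>m N"
    by (rule mat_mult_left_right_inverse[of _ N]) (use k in auto)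
  have "(transpose_mat k * k) $$ (a,b) = (\<Sum>i<N. k $$ (i,a) * k $$ (i,b))"
    by (subst mult_entry[of _ N N]) (use k assms in auto)
  thus ?thesis using kt k assms by simp
qed

lemma psi_left_orth:
  assumes k: "k \<in> SO N" and g: "g \<in> carrier_mat N N" and m: "m \<le> N"
  shows "psi N m (k * g) = psi N m g"
  unfolding psi_def
proof (rule gramdet_dot_cong)
  fix a b assume a: "a < m" and b: "b < m"
  have kc: "k \<in> carrier_mat N N" using SO_carrier[OF k] .
  let ?Y = "\<lambda>i j. k $$ (i,j)"
  have e: "dotv N (colsv (k * g) c) (colsv (k * g) c') = dotv N (ymap N ?Y (colsv g c)) (ymap N ?Y (colsv g c'))"
    if "c < N" "c' < N" for c c'
    by (rule dotv_cong) (use that kc g in \<open>auto simp: colsv_def ymap_def scalar_prod_def atLeast0LessThan\<close>)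
  show "dotv N (colsv (k * g) a) (colsv (k * g) b) = dotv N (colsv g a) (colsv g b)"
    unfolding e[OF order.strict_trans2[OF a m] order.strict_trans2[OF b m]]
    by (rule ymap_orth) (use SO_cols[OF k] in auto)
qed

lemma psi_right_block:
  assumes x: "x \<in> carrier_mat N N" and h: "h \<in> carrier_mat N N" and m: "m \<le> N"
    and z: "\<And>i l. m \<le> i \<Longrightarrow> i < N \<Longrightarrow> l < m \<Longrightarrow> h $$ (i,l) = 0"
  shows "psi N m (x * h) = det (mat m m (\<lambda>(a,l). h $$ (a,l))) ^ 2 * psi N m x"
proof -
  let ?T = "mat m m (\<lambda>(a,l). h $$ (a,l))"
  have "psi N m (x * h) = gramdet N m (\<lambda>l i. \<Sum>a<m. ?T $$ (a,l) * colsv x a i)"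
    unfolding psi_def
  proof (rule gramdet_cong)
    fix l i assume l: "l < m" and i: "i < N"
    have "colsv (x * h) l i = (\<Sum>a<N. x $$ (i,a) * h $$ (a,l))"
      unfolding colsv_def by (rule mult_entry[of _ N N _ N]) (use x h l i m in auto)
    also have "\<dots> = (\<Sum>a<m. x $$ (i,a) * h $$ (a,l))"
      by (rule sum.mono_neutral_right) (use m z l in auto)
    also have "\<dots> = (\<Sum>a<m. ?T $$ (a,l) * colsv x a i)"
      by (rule sum.cong) (use l in \<open>auto simp: colsv_def\<close>)
    finally show "colsv (x * h) l i = (\<Sum>a<m. ?T $$ (a,l) * colsv x a i)" .
  qed
  also have "\<dots> = det ?T ^ 2 * psi N m x"
    unfolding psi_def by (rule gramdet_lin) simp
  finally show ?thesis .
qed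

lemma psi_diag:
  assumes d: "d \<in> carrier_mat N N" "diagonal_mat d" and m: "m \<le> N"
  shows "psi N m d = (\<Prod>i<m. (d $$ (i,i))^2)"
proof -
  have G: "gram N m (colsv d) \<in> carrier_mat m m" by simp
  have off: "dotv N (colsv d a) (colsv d b) = (if a = b then (d $$ (a,a))^2 else 0)" if "a < m" "b < m" for a b
  proof -
    have "dotv N (colsv d a) (colsv d b) = (\<Sum>i<N. if i = a then (if a = b then (d $$ (a,a))^2 else 0) else 0)"
      unfolding dotv_def colsv_def
      by (rule sum.cong) (use d that m in \<open>auto simp: diagonal_mat_def power2_eq_square\<close>)
    also have "\<dots> = (if a = b then (d $$ (a,a))^2 else 0)" using that m by (simp add: sum.delta)
    finally show ?thesis .
  qed
  have "det (gram N m (colsv d)) = prod_list (diag_mat (gram N m (colsv d)))"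
    by (rule det_upper_triangular[OF _ G]) (auto simp: upper_triangular_def gram_def off)
  also have "\<dots> = (\<Prod>i<m. (d $$ (i,i))^2)" unfolding prod_list_diag_prod
    by (simp add: gram_def off atLeast0LessThan)
  finally show ?thesis unfolding psi_def gramdet_def .
qed

lemma psi_one: "m \<le> N \<Longrightarrow> psi N m (1\<^sub>m N) = 1"
  by (subst psi_diag[of _ N]) (auto simp: diagonal_mat_def)

lemma rho_left_unitri:
  assumes u: "u \<in> carrier_mat N N" and Y: "Y \<in> carrier_mat N N" and m: "m \<le> N"
    and lt: "\<And>i j. j < i \<Longrightarrow> i < N \<Longrightarrow> u $$ (i,j) = 0"
    and dg: "\<And>i. i < N \<Longrightarrow> u $$ (i,i) = 1"
  shows "rho N m (u * Y) = rho N m Y"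
proof -
  let ?T = "mat (N-m) (N-m) (\<lambda>(b,a). u $$ (m+a, m+b))"
  have T: "?T \<in> carrier_mat (N-m) (N-m)" by simp
  have "rho N m (u * Y) = gramdet N (N-m) (\<lambda>a c. \<Sum>b<N-m. ?T $$ (b,a) * rowsv m Y b c)"
    unfolding rho_def
  proof (rule gramdet_cong)
    fix a c assume a: "a < N - m" and c: "c < N"
    have "rowsv m (u * Y) a c = (\<Sum>l<N. u $$ (m+a,l) * Y $$ (l,c))"
      unfolding rowsv_def by (rule mult_entry) (use u Y a c m in auto)
    also have "\<dots> = (\<Sum>l\<in>{m..<N}. u $$ (m+a,l) * Y $$ (l,c))"
      by (rule sum.mono_neutral_right) (use a lt in auto)
    also have "\<dots> = (\<Sum>b<N-m. u $$ (m+a,m+b) * Y $$ (m+b,c))"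
    proof -
      have "{m..<N} = (\<lambda>b. m + b) ` {..<N-m}"
      proof (intro equalityI subsetI)
        fix x assume "x \<in> {m..<N}"
        thus "x \<in> (\<lambda>b. m + b) ` {..<N-m}" by (intro rev_image_eqI[of "x - m"]) auto
      qed auto
      thus ?thesis by (simp add: sum.reindex)
    qed
    also have "\<dots> = (\<Sum>b<N-m. ?T $$ (b,a) * rowsv m Y b c)"
      by (rule sum.cong) (use a in \<open>auto simp: rowsv_def\<close>)
    finally show "rowsv m (u * Y) a c = (\<Sum>b<N-m. ?T $$ (b,a) * rowsv m Y b c)" .
  qed
  also have "\<dots> = det ?T ^ 2 * rho N m Y" unfolding rho_def by (rule gramdet_lin[OF T])
  also have "det ?T = 1"
  proof -
    have "det ?T = prod_list (diag_mat ?T)"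
      by (rule det_lower_triangular[OF _ T]) (use lt in auto)
    also have "\<dots> = 1" unfolding prod_list_diag_prod using dg m by simp
    finally show ?thesis .
  qed
  finally show ?thesis by simp
qed

lemma rho_right_orth:
  assumes k: "k \<in> SO N" and Y: "Y \<in> carrier_mat N N" and m: "m \<le> N"
  shows "rho N m (Y * k) = rho N m Y"
  unfolding rho_def
proof (rule gramdet_dot_cong)
  fix a b assume a: "a < N - m" and b: "b < N - m"
  have kc: "k \<in> carrier_mat N N" using SO_carrier[OF k] .
  let ?Y = "\<lambda>i j. k $$ (j,i)"
  have e: "dotv N (rowsv m (Y * k) c) (rowsv m (Y * k) c') = dotv N (ymap N ?Y (rowsv m Y c)) (ymap N ?Y (rowsv m Y c'))"
    if "c < N - m" "c' < N - m" for c c'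
    by (rule dotv_cong) (use that kc Y in \<open>auto simp: rowsv_def ymap_def scalar_prod_def atLeast0LessThan mult.commute\<close>)
  show "dotv N (rowsv m (Y * k) a) (rowsv m (Y * k) b) = dotv N (rowsv m Y a) (rowsv m Y b)"
    unfolding e[OF a b]
    by (rule ymap_orth) (use SO_rows[OF k] in auto)
qed

lemma rho_orth:
  assumes k: "k \<in> SO N" and m: "m \<le> N"
  shows "rho N m k = 1"
  unfolding rho_def
  by (rule gramdet_orthonormal) (use SO_rows[OF k] m in \<open>auto simp: dotv_def rowsv_def\<close>)


lemma blockstart_Suc: "blockstart ns (Suc k) = blockstart ns k + (if k < length ns then ns ! k else 0)"
  unfolding blockstart_def by (simp add: take_Suc_conv_app_nth)

lemma blockstart_mono: "k \<le> k' \<Longrightarrow> blockstart ns k \<le> blockstart ns k'"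
proof (induction k' rule: dec_induct)
  case (step k') thus ?case using blockstart_Suc[of ns k'] by simp
qed simp

lemma blockstart_length: "valid_blocks N ns \<Longrightarrow> blockstart ns (length ns) = N"
  unfolding blockstart_def valid_blocks_def by simp

lemma blockstart_le: "valid_blocks N ns \<Longrightarrow> k \<le> length ns \<Longrightarrow> blockstart ns k \<le> N"
  using blockstart_mono[of k "length ns" ns] blockstart_length by metis

lemma in_some_block_aux:
  "\<forall>l < blockstart ns K. \<exists>k<K. l \<in> block ns k"
proof (induction K)
  case 0 thus ?case by (simp add: blockstart_def)
next
  case (Suc K)
  show ?case
  proof (intro allI impI)
    fix l assume l: "l < blockstart ns (Suc K)"
    show "\<exists>k<Suc K. l \<in> block ns k"
    proof (cases "l < blockstart ns K")
      case True thus ?thesis using Suc.IH by (meson less_SucI)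
    next
      case False thus ?thesis using l by (intro exI[of _ K]) (auto simp: block_def)
    qed
  qed
qed

lemma in_some_block: "valid_blocks N ns \<Longrightarrow> l < N \<Longrightarrow> \<exists>k<length ns. l \<in> block ns k"
  using in_some_block_aux[of ns "length ns"] blockstart_length by metis

lemma block_index_ge:
  assumes "p \<in> block ns k" "blockstart ns j \<le> p"
  shows "j \<le> k"
proof (rule ccontr)
  assume "\<not> j \<le> k" hence "Suc k \<le> j" by simp
  hence "blockstart ns (Suc k) \<le> blockstart ns j" by (rule blockstart_mono)
  thus False using assms by (auto simp: block_def)
qed

lemma prod_blocks:
  "(\<Prod>i<blockstart ns K. f i) = (\<Prod>k<K. \<Prod>i\<in>block ns k. f i)"
proof (induction K)
  case 0 thus ?case by (simp add: blockstart_def)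
next
  case (Suc K)
  have le: "blockstart ns K \<le> blockstart ns (Suc K)" by (rule blockstart_mono) simp
  have "{..<blockstart ns (Suc K)} = {..<blockstart ns K} \<union> block ns K"
    using le by (auto simp: block_def)
  moreover have "prod f ({..<blockstart ns K} \<union> block ns K) = prod f {..<blockstart ns K} * prod f (block ns K)"
    by (rule prod.union_disjoint) (auto simp: block_def)
  ultimately show ?case using Suc.IH by simp
qed

lemma U_blk_carrier: "u \<in> U_blk N ns \<Longrightarrow> u \<in> carrier_mat N N"
  unfolding U_blk_def SL_def by auto

lemma U_blk_unitri:
  assumes vb: "valid_blocks N ns" and u: "u \<in> U_blk N ns" and c: "c < N" and r: "c \<le> r" "r < N"
  shows "u $$ (r,c) = (if r = c then 1 else 0)"
proof -
  have uc: "u \<in> carrier_mat N N" by (rule U_blk_carrier[OF u])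
  obtain k where k: "k < length ns" "c \<in> block ns k" using in_some_block[OF vb c] by blast
  let ?x = "unit_vec N c :: real vec"
  have supp: "\<forall>i<N. i \<notin> block ns k \<longrightarrow> ?x $ i = 0" using k c by auto
  have "\<forall>i<N. blockstart ns k \<le> i \<longrightarrow> (?x - u *\<^sub>v ?x) $ i = 0"
    using u k supp unfolding U_blk_def by auto
  moreover have "blockstart ns k \<le> r" using k r by (auto simp: block_def)
  ultimately have e: "(?x - u *\<^sub>v ?x) $ r = 0" using r by auto
  have "(u *\<^sub>v ?x) $ r = u $$ (r,c)"
  proof -
    have "(u *\<^sub>v ?x) $ r = (\<Sum>l<N. u $$ (r,l) * (if l = c then 1 else 0))"
      using uc r c by (simp add: scalar_prod_def atLeast0LessThan)
    also have "\<dots> = u $$ (r,c)" using c by (simp add: if_distrib sum.delta cong: if_cong)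
    finally show ?thesis .
  qed
  thus ?thesis using e uc r c by auto
qed

lemma U_blk_lower0:
  assumes "valid_blocks N ns" "u \<in> U_blk N ns" "c < r" "r < N"
  shows "u $$ (r,c) = 0"
  using U_blk_unitri[OF assms(1,2), of c r] assms by auto

lemma U_blk_diag:
  assumes "valid_blocks N ns" "u \<in> U_blk N ns" "c < N"
  shows "u $$ (c,c) = 1"
  using U_blk_unitri[OF assms(1,2,3), of c] assms by auto

definition shear :: "nat \<Rightarrow> nat \<Rightarrow> nat \<Rightarrow> real \<Rightarrow> real mat" where
  "shear N i p s = mat N N (\<lambda>(r,c). (if r = c then 1 else 0) + (if r = i \<and> c = p then s else 0))"

lemma shear_carrier[simp]: "shear N i p s \<in> carrier_mat N N"
  unfolding shear_def by simp

lemma shear_det: assumes "i < p" shows "det (shear N i p s) = 1"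
proof -
  have "det (shear N i p s) = prod_list (diag_mat (shear N i p s))"
    by (rule det_upper_triangular[OF _ shear_carrier]) (use assms in \<open>auto simp: upper_triangular_def shear_def\<close>)
  also have "\<dots> = 1" unfolding prod_list_diag_prod using assms
    by (simp add: shear_def, intro prod.neutral) auto
  finally show ?thesis .
qed

lemma shear_in_U:
  assumes vb: "valid_blocks N ns" and j: "j \<le> length ns" and i: "i < blockstart ns j"
    and p: "blockstart ns j \<le> p" "p < N"
  shows "shear N i p s \<in> U_blk N ns"
proof -
  have ip: "i < p" using i p by simp
  have SL: "shear N i p s \<in> SL N" unfolding SL_def using shear_det[OF ip] by simp
  show ?thesis unfolding U_blk_def
  proof (intro CollectI conjI SL allI impI ballI)
    fix k and x :: "real vec" and t assume k: "k < length ns" and x: "x \<in> carrier_vec N"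
      and supp: "\<forall>i<N. i \<notin> block ns k \<longrightarrow> x $ i = 0" and t: "t < N" "blockstart ns k \<le> t"
    have mv: "(shear N i p s *\<^sub>v x) $ t = x $ t + (if t = i then s * x $ p else 0)"
    proof -
      have "(shear N i p s *\<^sub>v x) $ t = (\<Sum>c<N. ((if t = c then 1 else 0) + (if t = i \<and> c = p then s else 0)) * x $ c)"
        using t x by (simp add: scalar_prod_def atLeast0LessThan shear_def)
      also have "\<dots> = (\<Sum>c<N. (if t = c then x $ c else 0) + (if t = i \<and> c = p then s * x $ c else 0))"
        by (rule sum.cong) (auto simp: distrib_right)
      also have "\<dots> = (\<Sum>c<N. (if t = c then x $ c else 0)) + (\<Sum>c<N. (if t = i \<and> c = p then s * x $ c else 0))"
        by (simp only: sum.distrib)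
      also have "\<dots> = x $ t + (if t = i then s * x $ p else 0)"
        using t p by (cases "t = i") (simp_all add: sum.delta)
      finally show ?thesis .
    qed
    have "(if t = i then s * x $ p else 0) = 0"
    proof (cases "t = i")
      case True
      have "x $ p = 0"
      proof (rule ccontr)
        assume "x $ p \<noteq> 0"
        hence "p \<in> block ns k" using supp p by auto
        hence "j \<le> k" using block_index_ge p by blast
        hence "blockstart ns j \<le> blockstart ns k" by (rule blockstart_mono)
        thus False using True t i by simp
      qed
      thus ?thesis by simp
    qed simp
    moreover have "(x - shear N i p s *\<^sub>v x) $ t = x $ t - (shear N i p s *\<^sub>v x) $ t"
      using t by (simp add: shear_def)
    ultimately show "(x - shear N i p s *\<^sub>v x) $ t = 0" using mv by simp
  qed
qed

lemma one_in_U: assumes "valid_blocks N ns" shows "1\<^sub>m N \<in> U_blk N ns"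
  unfolding U_blk_def SL_def by auto

lemma one_in_SO: "1\<^sub>m N \<in> SO N"
  unfolding SO_def by simp


lemma sum_split0: fixes n :: nat shows "0 < n \<Longrightarrow> (\<Sum>l<n. f l) = f 0 + (\<Sum>l\<in>{1..<n}. f l)"
proof -
  assume n: "0 < n"
  have "{..<n} = insert 0 {1..<n}" using n by (auto simp: not_le less_one)
  thus ?thesis by (simp add: sum.insert)
qed

definition arrow :: "nat \<Rightarrow> real \<Rightarrow> (nat \<Rightarrow> real) \<Rightarrow> real mat" where
  "arrow n a b = mat n n (\<lambda>(r,c). if r = 0 \<and> c = 0 then a else if r = 0 then b c else if c = 0 then b r else if r = c then 1 else 0)"

lemma arrow_det:
  assumes n: "0 < n"
  shows "det (arrow n a b) = a - (\<Sum>r\<in>{1..<n}. (b r)^2)"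
proof -
  let ?M = "arrow n a b"
  let ?T = "mat n n (\<lambda>(r,c). if r = c then 1 else if c = 0 then - b r else (0::real))"
  have M: "?M \<in> carrier_mat n n" unfolding arrow_def by simp
  have T: "?T \<in> carrier_mat n n" by simp
  have MT: "(?M * ?T) $$ (r,c) = (if c = 0 then (if r = 0 then a - (\<Sum>l\<in>{1..<n}. (b l)^2) else 0) else ?M $$ (r,c))"
    if r: "r < n" and c: "c < n" for r c
  proof -
    have "(?M * ?T) $$ (r,c) = (\<Sum>l<n. ?M $$ (r,l) * ?T $$ (l,c))"
      by (rule mult_entry[OF M T r c])
    also have "\<dots> = ?M $$ (r,0) * ?T $$ (0,c) + (\<Sum>l\<in>{1..<n}. ?M $$ (r,l) * ?T $$ (l,c))"
      by (rule sum_split0[OF n])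
    finally have e: "(?M * ?T) $$ (r,c) = ?M $$ (r,0) * ?T $$ (0,c) + (\<Sum>l\<in>{1..<n}. ?M $$ (r,l) * ?T $$ (l,c))" .
    show ?thesis
    proof (cases "c = 0")
      case True
      have s: "(\<Sum>l\<in>{1..<n}. ?M $$ (r,l) * ?T $$ (l,c)) = (\<Sum>l\<in>{1..<n}. - (?M $$ (r,l) * b l))"
        by (rule sum.cong) (use True n in auto)
      show ?thesis
      proof (cases "r = 0")
        case True
        have "(\<Sum>l\<in>{1..<n}. - (?M $$ (r,l) * b l)) = - (\<Sum>l\<in>{1..<n}. (b l)^2)"
          by (simp add: sum_negf[symmetric], rule sum.cong) (use True in \<open>auto simp: arrow_def power2_eq_square\<close>)
        thus ?thesis using e s True \<open>c = 0\<close> n by (simp add: arrow_def)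
      next
        case False
        have "(\<Sum>l\<in>{1..<n}. - (?M $$ (r,l) * b l)) = (\<Sum>l\<in>{1..<n}. if l = r then - b r else 0)"
          by (rule sum.cong) (use False r in \<open>auto simp: arrow_def\<close>)
        also have "\<dots> = - b r" using False r by (simp add: sum.delta)
        finally show ?thesis using e s False \<open>c = 0\<close> n r by (simp add: arrow_def)
      qed
    next
      case False
      have "(\<Sum>l\<in>{1..<n}. ?M $$ (r,l) * ?T $$ (l,c)) = (\<Sum>l\<in>{1..<n}. if l = c then ?M $$ (r,c) else 0)"
        by (rule sum.cong) (use False c in auto)
      also have "\<dots> = ?M $$ (r,c)" using False c by (simp add: sum.delta)
      finally show ?thesis using e False c n by simp
    qed
  qed
  have MTc: "?M * ?T \<in> carrier_mat n n" using M T by simp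
  have "det (?M * ?T) = prod_list (diag_mat (?M * ?T))"
  proof (rule det_upper_triangular[OF _ MTc], unfold upper_triangular_def, intro allI impI)
    fix i j assume i: "i < dim_row (?M * ?T)" and j: "j < i"
    hence ij: "i < n" "j < n" using MTc by auto
    show "(?M * ?T) $$ (i,j) = 0" unfolding MT[OF ij] using j ij by (auto simp: arrow_def)
  qed
  also have "\<dots> = (\<Prod>r<n. (?M * ?T) $$ (r,r))" unfolding prod_list_diag_prod using MTc by (simp add: atLeast0LessThan arrow_def)
  also have "\<dots> = (\<Prod>r<n. if r = 0 then a - (\<Sum>l\<in>{1..<n}. (b l)^2) else 1)"
    by (rule prod.cong[OF refl], subst MT) (auto simp: arrow_def)
  also have "\<dots> = a - (\<Sum>l\<in>{1..<n}. (b l)^2)" using n by (simp add: prod.delta)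
  finally have 1: "det (?M * ?T) = a - (\<Sum>l\<in>{1..<n}. (b l)^2)" .
  have "det ?T = prod_list (diag_mat ?T)"
    by (rule det_lower_triangular[OF _ T]) auto
  also have "\<dots> = 1" unfolding prod_list_diag_prod by simp
  finally have "det ?T = 1" .
  with 1 det_mult[OF M T] show ?thesis by simp
qed


lemma dotv_ind_right: "p < n \<Longrightarrow> dotv n v (\<lambda>c. if c = p then e else 0) = e * v p"
  unfolding dotv_def by (simp add: if_distrib sum.delta cong: if_cong)

lemma dotv_pert:
  assumes p: "p < n"
  shows "dotv n (\<lambda>c. u c + (if c = p then e else 0)) (\<lambda>c. v c + (if c = p then f else 0))
       = dotv n u v + f * u p + e * v p + e * f"
proof -
  have 1: "dotv n (\<lambda>c. if c = p then e else 0) v = e * v p"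
    using dotv_ind_right[OF p, of v e] by (simp add: dotv_comm)
  have 2: "dotv n (\<lambda>c. if c = p then e else 0) (\<lambda>c. if c = p then f else 0) = e * f"
    using dotv_ind_right[OF p, of "\<lambda>c. if c = p then e else 0" f] by simp
  show ?thesis
    unfolding dotv_add_left dotv_add_right dotv_ind_right[OF p] 1 2 by simp
qed

lemma sum_delta_mult: fixes f :: "nat \<Rightarrow> real" shows "a < n \<Longrightarrow> (\<Sum>c<n. (if a = c then 1 else 0) * f c) = f a"
proof -
  assume a: "a < n"
  have "(\<Sum>c<n. (if a = c then 1 else 0) * f c) = (\<Sum>c<n. if c = a then f a else 0)"
    by (rule sum.cong) auto
  thus ?thesis using a by (simp add: sum.delta)
qed

lemma K_lemma:
  assumes k: "k \<in> SO N" and m: "m \<le> N"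
    and R: "\<And>i p s. i < m \<Longrightarrow> m \<le> p \<Longrightarrow> p < N \<Longrightarrow> rho N m (k * shear N i p s) = 1"
    and r0: "m \<le> r0" "r0 < N" and i: "i < m"
  shows "k $$ (r0,i) = 0"
proof (rule ccontr)
  assume nz: "k $$ (r0,i) \<noteq> 0"
  have kc: "k \<in> carrier_mat N N" using SO_carrier[OF k] .
  define n' where "n' = N - m"
  have n'pos: "0 < n'" using r0 unfolding n'_def by simp
  define \<alpha> where "\<alpha> r = k $$ (m+r, i)" for r
  define A where "A = sqrt (\<Sum>r<n'. (\<alpha> r)^2)"
  have sq_nonneg: "0 \<le> (\<Sum>r<n'. (\<alpha> r)^2)" by (rule sum_nonneg) simp
  have A2: "A^2 = (\<Sum>r<n'. (\<alpha> r)^2)" unfolding A_def using sq_nonneg by simp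
  have Apos: "A > 0"
  proof -
    have "(\<alpha> (r0 - m))^2 \<le> (\<Sum>r<n'. (\<alpha> r)^2)"
      by (rule member_le_sum) (use r0 in \<open>auto simp: n'_def\<close>)
    moreover have "(\<alpha> (r0 - m))^2 > 0" using nz r0 by (simp add: \<alpha>_def)
    ultimately have "0 < (\<Sum>r<n'. (\<alpha> r)^2)" by linarith
    thus ?thesis unfolding A_def by simp
  qed
  define w where "w r = \<alpha> r - (if r = 0 then A else 0)" for r
  define W2 where "W2 = (\<Sum>r<n'. (w r)^2)"
  define H where "H r r' = (if r = r' then 1 else 0) - 2 * w r * w r' / W2" for r r'
  have wa: "(\<Sum>r<n'. w r * \<alpha> r) = A^2 - A * \<alpha> 0"
  proof -
    have "(\<Sum>r<n'. w r * \<alpha> r) = (\<Sum>r<n'. (\<alpha> r)^2 - (if r = 0 then A * \<alpha> r else 0))"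
      by (rule sum.cong) (auto simp: w_def power2_eq_square algebra_simps)
    also have "\<dots> = (\<Sum>r<n'. (\<alpha> r)^2) - (\<Sum>r<n'. if r = 0 then A * \<alpha> r else 0)"
      by (simp only: sum_subtractf)
    finally have "(\<Sum>r<n'. w r * \<alpha> r) = (\<Sum>r<n'. (\<alpha> r)^2) - (\<Sum>r<n'. if r = 0 then A * \<alpha> r else 0)" .
    thus ?thesis using n'pos A2 by (simp add: sum.delta)
  qed
  have W2e: "W2 = 2 * (A^2 - A * \<alpha> 0)"
  proof -
    have "W2 = (\<Sum>r<n'. (\<alpha> r)^2) - 2 * (\<Sum>r<n'. if r = 0 then A * \<alpha> r else 0) + (\<Sum>r<n'. if r = 0 then A^2 else 0)"
    proof -
      have "W2 = (\<Sum>r<n'. ((\<alpha> r)^2 - 2 * (if r = 0 then A * \<alpha> r else 0)) + (if r = 0 then A^2 else 0))"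
        unfolding W2_def by (rule sum.cong) (auto simp: w_def power2_diff)
      also have "\<dots> = (\<Sum>r<n'. (\<alpha> r)^2) - 2 * (\<Sum>r<n'. if r = 0 then A * \<alpha> r else 0) + (\<Sum>r<n'. if r = 0 then A^2 else 0)"
        by (simp only: sum.distrib sum_subtractf sum_distrib_left)
      finally show ?thesis .
    qed
    thus ?thesis using n'pos A2 by (simp add: sum.delta)
  qed
  have w0: "W2 = 0 \<Longrightarrow> w r = 0" if "r < n'" for r
  proof -
    assume "W2 = 0"
    hence "\<forall>r\<in>{..<n'}. (w r)^2 = 0" unfolding W2_def by (subst sum_nonneg_eq_0_iff[symmetric]) auto
    thus ?thesis using that by simp
  qed
  have h1: "(\<Sum>c<n'. H a c * H b c) = (if a = b then 1 else 0)" if ab: "a < n'" "b < n'" for a b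
  proof (cases "W2 = 0")
    case True
    have "(\<Sum>c<n'. H a c * H b c) = (\<Sum>c<n'. if c = a then (if a = b then 1 else 0) else 0)"
      by (rule sum.cong) (auto simp: H_def True)
    thus ?thesis using ab by (simp add: sum.delta)
  next
    case False
    let ?d = "\<lambda>a c. if a = c then 1 else (0::real)"
    have "(\<Sum>c<n'. H a c * H b c) = (\<Sum>c<n'. ?d a c * ?d b c) - 2 * w b / W2 * (\<Sum>c<n'. ?d a c * w c)
          - 2 * w a / W2 * (\<Sum>c<n'. ?d b c * w c) + 4 * w a * w b / W2^2 * (\<Sum>c<n'. (w c)^2)"
    proof -
      have pw: "H a c * H b c = ?d a c * ?d b c - 2 * w b / W2 * (?d a c * w c)
          - 2 * w a / W2 * (?d b c * w c) + 4 * w a * w b / W2^2 * (w c)^2" for c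
        unfolding H_def using False by (simp add: field_simps power2_eq_square)
      show ?thesis unfolding pw
        by (simp only: sum.distrib sum_subtractf sum_distrib_left[symmetric])
    qed
    also have "(\<Sum>c<n'. ?d a c * ?d b c) = (if a = b then 1 else 0)"
    proof -
      have "(\<Sum>c<n'. ?d a c * ?d b c) = (\<Sum>c<n'. if c = a then ?d b a else 0)"
        by (rule sum.cong) auto
      thus ?thesis using ab by (simp add: sum.delta)
    qed
    also have "(\<Sum>c<n'. ?d a c * w c) = w a" by (rule sum_delta_mult[OF ab(1)])
    also have "(\<Sum>c<n'. ?d b c * w c) = w b" by (rule sum_delta_mult[OF ab(2)])
    also have "(\<Sum>c<n'. (w c)^2) = W2" unfolding W2_def ..
    finally show ?thesis using False by (simp add: power2_eq_square field_simps)
  qed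
  have h2: "(\<Sum>c<n'. H a c * \<alpha> c) = (if a = 0 then A else 0)" if a: "a < n'" for a
  proof (cases "W2 = 0")
    case True
    have "(\<Sum>c<n'. H a c * \<alpha> c) = (\<Sum>c<n'. if c = a then \<alpha> a else 0)"
      by (rule sum.cong) (auto simp: H_def True)
    also have "\<dots> = \<alpha> a" using a by (simp add: sum.delta)
    also have "\<dots> = (if a = 0 then A else 0)" using w0[OF a True] by (simp add: w_def)
    finally show ?thesis .
  next
    case False
    have "(\<Sum>c<n'. H a c * \<alpha> c) = (\<Sum>c<n'. if a = c then \<alpha> c else 0) - 2 * w a / W2 * (\<Sum>c<n'. w c * \<alpha> c)"
    proof -
      have pw: "H a c * \<alpha> c = (if a = c then \<alpha> c else 0) - 2 * w a / W2 * (w c * \<alpha> c)" for c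
        unfolding H_def by (simp add: algebra_simps)
      show ?thesis unfolding pw by (simp only: sum_subtractf sum_distrib_left[symmetric])
    qed
    also have "(\<Sum>c<n'. if a = c then \<alpha> c else 0) = \<alpha> a" using a by (simp add: sum.delta)
    also have "2 * w a / W2 * (\<Sum>c<n'. w c * \<alpha> c) = w a"
      using False unfolding wa W2e by (simp add: field_simps)
    finally show ?thesis by (simp add: w_def)
  qed
  have Hsym: "H a b = H b a" for a b unfolding H_def by (simp add: mult_ac)
  define x where "x r c = k $$ (m+r, c)" for r c
  define z where "z a c = (\<Sum>b<n'. H a b * x b c)" for a c
  have xorth: "dotv N (x a) (x b) = (if a = b then 1 else 0)" if "a < n'" "b < n'" for a b
    using SO_rows[OF k, of "m+a" "m+b"] that unfolding dotv_def x_def n'_def by simp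
  have z1: "dotv N (z a) (z b) = (if a = b then 1 else 0)" if ab: "a < n'" "b < n'" for a b
  proof -
    have "dotv N (z a) (z b) = (\<Sum>c<n'. H a c * (\<Sum>c'<n'. H b c' * dotv N (x c) (x c')))"
      unfolding z_def dotv_sum_left dotv_sum_right ..
    also have "\<dots> = (\<Sum>c<n'. H a c * H b c)"
    proof (rule sum.cong[OF refl])
      fix c assume c: "c \<in> {..<n'}"
      have "(\<Sum>c'<n'. H b c' * dotv N (x c) (x c')) = (\<Sum>c'<n'. if c' = c then H b c else 0)"
        by (rule sum.cong) (use c in \<open>auto simp: xorth\<close>)
      also have "\<dots> = H b c" using c by (simp add: sum.delta)
      finally show "H a c * (\<Sum>c'<n'. H b c' * dotv N (x c) (x c')) = H a c * H b c" by simp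
    qed
    also have "\<dots> = (if a = b then 1 else 0)" by (rule h1[OF ab])
    finally show ?thesis .
  qed
  have z2: "z a i = (if a = 0 then A else 0)" if "a < n'" for a
    using h2[OF that] unfolding z_def x_def \<alpha>_def .
  have main: "1 + 2 * s * A * z 0 p + s^2 * A^2 - (\<Sum>r\<in>{1..<n'}. (s * A * z r p)^2) = 1"
    if p: "m \<le> p" "p < N" for p s
  proof -
    let ?vs = "\<lambda>r c. x r c + (if c = p then s * \<alpha> r else 0)"
    let ?y = "\<lambda>a c. z a c + (if c = p then s * (if a = 0 then A else 0) else 0)"
    let ?T = "mat n' n' (\<lambda>(b,a). H a b)"
    have T: "?T \<in> carrier_mat n' n'" by simp
    have 1: "rho N m (k * shear N i p s) = gramdet N n' ?vs"
      unfolding rho_def n'_def[symmetric]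
    proof (rule gramdet_cong)
      fix r c assume r: "r < n'" and c: "c < N"
      have "rowsv m (k * shear N i p s) r c = (\<Sum>l<N. k $$ (m+r,l) * shear N i p s $$ (l,c))"
        unfolding rowsv_def by (rule mult_entry[OF kc shear_carrier]) (use r c in \<open>auto simp: n'_def\<close>)
      also have "\<dots> = (\<Sum>l<N. (if l = c then k $$ (m+r,l) else 0) + (if l = i then (if c = p then s * k $$ (m+r,l) else 0) else 0))"
        by (rule sum.cong) (use c in \<open>auto simp: shear_def algebra_simps\<close>)
      also have "\<dots> = ?vs r c"
        using c i m by (simp add: sum.distrib sum.delta x_def \<alpha>_def)
      finally show "rowsv m (k * shear N i p s) r c = ?vs r c" .
    qed
    have 2: "gramdet N n' (\<lambda>a c. \<Sum>b<n'. ?T $$ (b,a) * ?vs b c) = gramdet N n' ?y"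
    proof (rule gramdet_cong)
      fix a c assume a: "a < n'" and c: "c < N"
      have "(\<Sum>b<n'. ?T $$ (b,a) * ?vs b c) = (\<Sum>b<n'. H a b * x b c) + (if c = p then s * (\<Sum>b<n'. H a b * \<alpha> b) else 0)"
        using a by (simp add: distrib_left sum.distrib sum_distrib_left mult_ac)
      thus "(\<Sum>b<n'. ?T $$ (b,a) * ?vs b c) = ?y a c" using h2[OF a] unfolding z_def by simp
    qed
    have detT: "det ?T ^ 2 = 1"
    proof -
      have "?T * transpose_mat ?T = 1\<^sub>m n'"
      proof (rule eq_matI)
        fix a b assume "a < dim_row (1\<^sub>m n')" "b < dim_col (1\<^sub>m n')"
        hence ab: "a < n'" "b < n'" by auto
        have "(?T * transpose_mat ?T) $$ (a,b) = (\<Sum>l<n'. ?T $$ (a,l) * transpose_mat ?T $$ (l,b))"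
          by (rule mult_entry[of _ n' n']) (use ab in auto)
        also have "\<dots> = (\<Sum>l<n'. H a l * H b l)"
          by (rule sum.cong) (use ab in \<open>auto simp: Hsym\<close>)
        finally show "(?T * transpose_mat ?T) $$ (a,b) = 1\<^sub>m n' $$ (a,b)" using h1[OF ab] ab by simp
      qed auto
      hence "det ?T * det (transpose_mat ?T) = 1"
        using det_mult[OF T, of "transpose_mat ?T"] by simp
      thus ?thesis using det_transpose[OF T] by (simp add: power2_eq_square)
    qed
    have gy: "gramdet N n' ?y = 1"
      using R[OF i p] 1 2 gramdet_lin[OF T, of N ?vs] detT by simp
    have "gram N n' ?y = arrow n' (1 + 2 * s * A * z 0 p + s^2 * A^2) (\<lambda>r. s * A * z r p)"
    proof (rule eq_matI)
      fix a b assume "a < dim_row (arrow n' (1 + 2 * s * A * z 0 p + s^2 * A^2) (\<lambda>r. s * A * z r p))"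
        "b < dim_col (arrow n' (1 + 2 * s * A * z 0 p + s^2 * A^2) (\<lambda>r. s * A * z r p))"
      hence ab: "a < n'" "b < n'" by (auto simp: arrow_def)
      let ?ea = "s * (if a = 0 then A else 0)" and ?eb = "s * (if b = 0 then A else 0)"
      have "dotv N (?y a) (?y b) = dotv N (z a) (z b) + ?eb * z a p + ?ea * z b p + ?ea * ?eb"
        by (rule dotv_pert[OF p(2)])
      thus "gram N n' ?y $$ (a,b) = arrow n' (1 + 2 * s * A * z 0 p + s^2 * A^2) (\<lambda>r. s * A * z r p) $$ (a,b)"
        using ab by (auto simp: gram_def arrow_def z1 power2_eq_square algebra_simps)
    qed (auto simp: gram_def arrow_def)
    hence "gramdet N n' ?y = 1 + 2 * s * A * z 0 p + s^2 * A^2 - (\<Sum>r\<in>{1..<n'}. (s * A * z r p)^2)"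
      unfolding gramdet_def using arrow_det[OF n'pos] by simp
    thus ?thesis using gy by simp
  qed
  have colp: "(\<Sum>r<n'. (z r p)^2) = 1" if p: "m \<le> p" "p < N" for p
  proof -
    let ?S = "\<Sum>r\<in>{1..<n'}. (z r p)^2"
    have e1: "2 * A * z 0 p + A^2 - A^2 * ?S = 0"
      using main[OF p, of 1] by (simp add: power_mult_distrib sum_distrib_left[symmetric])
    have e2: "- 2 * A * z 0 p + A^2 - A^2 * ?S = 0"
      using main[OF p, of "-1"] by (simp add: power_mult_distrib sum_distrib_left[symmetric])
    have "A * z 0 p = 0" using e1 e2 by linarith
    hence z0: "z 0 p = 0" using Apos by simp
    have "A^2 * (1 - ?S) = 0" using e1 z0 by (simp add: algebra_simps)
    hence "?S = 1" using Apos by simp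
    thus ?thesis using sum_split0[OF n'pos, of "\<lambda>r. (z r p)^2"] z0 by simp
  qed
  have tot1: "(\<Sum>r<n'. \<Sum>c\<in>{m..<N}. (z r c)^2) = real n'"
  proof -
    have "(\<Sum>r<n'. \<Sum>c\<in>{m..<N}. (z r c)^2) = (\<Sum>c\<in>{m..<N}. \<Sum>r<n'. (z r c)^2)" by (rule sum.swap)
    also have "\<dots> = (\<Sum>c\<in>{m..<N}. 1)" by (rule sum.cong) (auto simp: colp)
    finally show ?thesis by (simp add: n'_def)
  qed
  have tot2: "(\<Sum>r<n'. \<Sum>c<N. (z r c)^2) = real n'"
  proof -
    have "(\<Sum>r<n'. \<Sum>c<N. (z r c)^2) = (\<Sum>r<n'. 1)"
      by (rule sum.cong) (use z1 in \<open>auto simp: dotv_def power2_eq_square\<close>)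
    thus ?thesis by simp
  qed
  have split: "(\<Sum>c<N. (z r c)^2) = (\<Sum>c<m. (z r c)^2) + (\<Sum>c\<in>{m..<N}. (z r c)^2)" for r
  proof -
    have "{..<N} = {..<m} \<union> {m..<N}" using m by auto
    moreover have "sum (\<lambda>c. (z r c)^2) ({..<m} \<union> {m..<N}) = (\<Sum>c<m. (z r c)^2) + (\<Sum>c\<in>{m..<N}. (z r c)^2)"
      by (rule sum.union_disjoint) auto
    ultimately show ?thesis by simp
  qed
  have zero: "(\<Sum>r<n'. \<Sum>c<m. (z r c)^2) = 0"
    using tot1 tot2 by (simp add: split sum.distrib)
  have "(z 0 i)^2 \<le> (\<Sum>c<m. (z 0 c)^2)"
    by (rule member_le_sum) (use i in auto)
  also have "\<dots> \<le> (\<Sum>r<n'. \<Sum>c<m. (z r c)^2)"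
    by (rule member_le_sum[of 0 "{..<n'}" "\<lambda>r. \<Sum>c<m. (z r c)^2"]) (use n'pos in \<open>auto intro: sum_nonneg\<close>)
  finally have "(z 0 i)^2 \<le> 0" using zero by simp
  hence "z 0 i = 0" by simp
  thus False using z2[OF n'pos] Apos by simp
qed


lemma U_rho:
  assumes vb: "valid_blocks N ns" and u: "u \<in> U_blk N ns" and Y: "Y \<in> carrier_mat N N" and m: "m \<le> N"
  shows "rho N m (u * Y) = rho N m Y"
  by (rule rho_left_unitri[OF U_blk_carrier[OF u] Y m])
     (auto intro: U_blk_lower0[OF vb u] U_blk_diag[OF vb u])

lemma Ghor_psi:
  assumes vb: "valid_blocks N ns" and j: "j < length ns" and h: "h \<in> G_hor N ns"
    and x: "x \<in> carrier_mat N N"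
  shows "psi N (blockstart ns j) (x * h) = psi N (blockstart ns j) x"
proof -
  define m where "m = blockstart ns j"
  have m: "m \<le> N" unfolding m_def using blockstart_le[OF vb] j by simp
  define UK where "UK = {u * k | u k. u \<in> U_blk N ns \<and> k \<in> SO N}"
  have hSL: "h \<in> SL N" and hUK: "(\<lambda>y. h * y) ` UK = UK"
    using h unfolding G_hor_def Let_def UK_def by auto
  have hc: "h \<in> carrier_mat N N" using hSL unfolding SL_def by auto
  have oneUK: "1\<^sub>m N \<in> UK" unfolding UK_def
    by (rule CollectI, rule exI[of _ "1\<^sub>m N"], rule exI[of _ "1\<^sub>m N"]) (simp add: one_in_U[OF vb] one_in_SO)
  have "h * 1\<^sub>m N \<in> UK" using hUK oneUK by blast
  hence "h \<in> UK" using hc by simp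
  then obtain u1 k1 where u1: "u1 \<in> U_blk N ns" and k1: "k1 \<in> SO N" and hk: "h = u1 * k1"
    unfolding UK_def by blast
  have u1c: "u1 \<in> carrier_mat N N" using U_blk_carrier[OF u1] .
  have k1c: "k1 \<in> carrier_mat N N" using SO_carrier[OF k1] .
  have rho1: "rho N m (k1 * v) = 1" if v: "v \<in> U_blk N ns" for v
  proof -
    have vc: "v \<in> carrier_mat N N" using U_blk_carrier[OF v] .
    have "v \<in> UK" unfolding UK_def
      by (rule CollectI, rule exI[of _ v], rule exI[of _ "1\<^sub>m N"]) (use v vc one_in_SO in auto)
    hence "h * v \<in> UK" using hUK by blast
    then obtain u' k' where u': "u' \<in> U_blk N ns" and k': "k' \<in> SO N" and e: "h * v = u' * k'"
      unfolding UK_def by blast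
    have "rho N m (h * v) = rho N m k'"
      unfolding e by (rule U_rho[OF vb u' SO_carrier[OF k'] m])
    also have "\<dots> = 1" by (rule rho_orth[OF k' m])
    finally have "rho N m (h * v) = 1" .
    moreover have "h * v = u1 * (k1 * v)" unfolding hk using u1c k1c vc by simp
    moreover have "rho N m (u1 * (k1 * v)) = rho N m (k1 * v)"
      by (rule U_rho[OF vb u1 _ m]) (use k1c vc in simp)
    ultimately show ?thesis by simp
  qed
  have k1z: "k1 $$ (r,i) = 0" if "m \<le> r" "r < N" "i < m" for r i
  proof (rule K_lemma[OF k1 m _ that])
    fix i p s assume "i < m" "m \<le> p" "p < N"
    thus "rho N m (k1 * shear N i p s) = 1"
      by (intro rho1 shear_in_U[OF vb, of j]) (use j in \<open>auto simp: m_def\<close>)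
  qed
  have u1z: "u1 $$ (r,i) = 0" if "m \<le> r" "r < N" "i < m" for r i
    using U_blk_lower0[OF vb u1] that by simp
  let ?Tu = "mat m m (\<lambda>(a,l). u1 $$ (a,l))" and ?Tk = "mat m m (\<lambda>(a,l). k1 $$ (a,l))"
  have dTu: "det ?Tu = 1"
  proof -
    have Tc: "?Tu \<in> carrier_mat m m" by simp
    have "det ?Tu = prod_list (diag_mat ?Tu)"
      by (rule det_upper_triangular[OF _ Tc]) (use m U_blk_lower0[OF vb u1] in \<open>auto simp: upper_triangular_def\<close>)
    also have "\<dots> = 1" unfolding prod_list_diag_prod using m U_blk_diag[OF vb u1] by simp
    finally show ?thesis .
  qed
  have dTk: "det ?Tk ^ 2 = 1"
  proof -
    have "psi N m (1\<^sub>m N * k1) = det ?Tk ^ 2 * psi N m (1\<^sub>m N)"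
      by (rule psi_right_block[OF one_carrier_mat k1c m k1z])
    moreover have "psi N m (1\<^sub>m N * k1) = 1"
    proof -
      have "1\<^sub>m N * k1 = k1 * 1\<^sub>m N" using k1c by simp
      hence "psi N m (1\<^sub>m N * k1) = psi N m (1\<^sub>m N)" using psi_left_orth[OF k1 one_carrier_mat m] by simp
      thus ?thesis using psi_one[OF m] by simp
    qed
    ultimately show ?thesis using psi_one[OF m] by simp
  qed
  have xu: "x * u1 \<in> carrier_mat N N" using x u1c by simp
  have "psi N m (x * h) = psi N m ((x * u1) * k1)" unfolding hk using x u1c k1c by simp
  also have "\<dots> = det ?Tk ^ 2 * psi N m (x * u1)" by (rule psi_right_block[OF xu k1c m k1z])
  also have "\<dots> = psi N m (x * u1)" using dTk by simp
  also have "\<dots> = det ?Tu ^ 2 * psi N m x" by (rule psi_right_block[OF x u1c m u1z])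
  also have "\<dots> = psi N m x" using dTu by simp
  finally show ?thesis unfolding m_def .
qed


definition matf :: "real mat \<Rightarrow> nat \<Rightarrow> nat \<Rightarrow> real" where "matf g = (\<lambda>i j. g $$ (i,j))"

lemma CS_bound:
  "dotv n (ymap n M v) (ymap n M v) \<le> (\<Sum>i<n. \<Sum>j<n. (M i j)^2) * dotv n v v"
proof -
  have "dotv n (ymap n M v) (ymap n M v) = (\<Sum>i<n. (\<Sum>j<n. M i j * v j)^2)"
    unfolding dotv_def ymap_def by (simp add: power2_eq_square)
  also have "\<dots> \<le> (\<Sum>i<n. (\<Sum>j<n. (M i j)^2) * (\<Sum>j<n. (v j)^2))"
    by (rule sum_mono) (rule Cauchy_Schwarz_ineq_sum)
  also have "\<dots> = (\<Sum>i<n. \<Sum>j<n. (M i j)^2) * dotv n v v"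
    unfolding dotv_def by (simp add: sum_distrib_right power2_eq_square)
  finally show ?thesis .
qed

lemma dotv_ymap_cong: "(\<And>j. j < n \<Longrightarrow> v j = v' j) \<Longrightarrow> ymap n M v = ymap n M v'"
  unfolding ymap_def by (auto intro!: sum.cong)

lemma inv_lower_bound:
  assumes g: "g \<in> carrier_mat N N" and gi: "gi \<in> carrier_mat N N" and inv: "gi * g = 1\<^sub>m N"
  shows "dotv N (ymap N (matf g) x) (ymap N (matf g) x) \<ge> (1 / (1 + (\<Sum>i<N. \<Sum>j<N. (gi $$ (i,j))^2))) * dotv N x x"
proof -
  define F where "F = 1 + (\<Sum>i<N. \<Sum>j<N. (gi $$ (i,j))^2)"
  have S0: "0 \<le> (\<Sum>i<N. \<Sum>j<N. (gi $$ (i,j))^2)" by (intro sum_nonneg) simp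
  hence Fpos: "F > 0" unfolding F_def by simp
  have bk: "ymap N (matf gi) (ymap N (matf g) x) j = x j" if j: "j < N" for j
  proof -
    have "ymap N (matf gi) (ymap N (matf g) x) j = (\<Sum>i<N. \<Sum>l<N. gi $$ (j,i) * g $$ (i,l) * x l)"
      unfolding ymap_def matf_def by (simp add: sum_distrib_left mult.assoc)
    also have "\<dots> = (\<Sum>l<N. \<Sum>i<N. gi $$ (j,i) * g $$ (i,l) * x l)" by (rule sum.swap)
    also have "\<dots> = (\<Sum>l<N. (gi * g) $$ (j,l) * x l)"
      by (rule sum.cong[OF refl]) (use j gi g in \<open>auto simp: scalar_prod_def atLeast0LessThan sum_distrib_right\<close>)
    also have "\<dots> = (\<Sum>l<N. (if j = l then 1 else 0) * x l)"
      by (rule sum.cong) (use j in \<open>auto simp: inv\<close>)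
    also have "\<dots> = x j" by (rule sum_delta_mult[OF j])
    finally show ?thesis .
  qed
  have "dotv N x x = dotv N (ymap N (matf gi) (ymap N (matf g) x)) (ymap N (matf gi) (ymap N (matf g) x))"
    by (rule dotv_cong) (simp_all add: bk)
  also have "\<dots> \<le> (\<Sum>i<N. \<Sum>j<N. (matf gi i j)^2) * dotv N (ymap N (matf g) x) (ymap N (matf g) x)"
    by (rule CS_bound)
  also have "\<dots> \<le> F * dotv N (ymap N (matf g) x) (ymap N (matf g) x)"
    by (rule mult_right_mono) (auto simp: F_def matf_def dotv_nonneg)
  finally show ?thesis
    using Fpos unfolding F_def[symmetric] by (simp add: field_simps)
qed

lemma has_inverse:
  fixes g :: "real mat"
  assumes g: "g \<in> carrier_mat N N" and d: "det g \<noteq> 0"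
  shows "\<exists>gi \<in> carrier_mat N N. gi * g = 1\<^sub>m N \<and> g * gi = 1\<^sub>m N"
proof -
  have "g \<in> Units (ring_mat TYPE(real) N undefined)" by (rule det_non_zero_imp_unit[OF g d])
  thus ?thesis unfolding Units_def ring_mat_def by auto
qed

lemma local_bound:
  assumes g0: "g0 \<in> carrier_mat N N" and d: "det g0 \<noteq> 0"
  shows "\<exists>\<epsilon>>0. \<exists>\<sigma>>0. \<sigma> \<le> 1 \<and> (\<forall>w \<in> carrier_mat N N.
           (\<Sum>i<N. \<Sum>j<N. (w $$ (i,j) - g0 $$ (i,j))^2) < \<epsilon> \<longrightarrow>
           (\<forall>x. dotv N (ymap N (matf w) x) (ymap N (matf w) x) \<ge> \<sigma> * dotv N x x))"
proof -
  obtain gi where gi: "gi \<in> carrier_mat N N" "gi * g0 = 1\<^sub>m N" using has_inverse[OF g0 d] by blast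
  define F where "F = 1 + (\<Sum>i<N. \<Sum>j<N. (gi $$ (i,j))^2)"
  have Fpos: "F > 0" unfolding F_def by (simp add: add_pos_nonneg sum_nonneg)
  have lb: "\<And>x. dotv N (ymap N (matf g0) x) (ymap N (matf g0) x) \<ge> (1 / F) * dotv N x x"
    using inv_lower_bound[OF g0 gi] unfolding F_def by auto
  have F1: "F \<ge> 1" unfolding F_def by (simp add: sum_nonneg)
  define \<epsilon> where "\<epsilon> = 1 / (4 * F)"
  have epos: "\<epsilon> > 0" unfolding \<epsilon>_def using Fpos by simp
  have spos: "1 / (4 * F) > 0" using Fpos by simp
  have sle: "1 / (4 * F) \<le> 1" using F1 by simp
  have key: "\<forall>w \<in> carrier_mat N N.
           (\<Sum>i<N. \<Sum>j<N. (w $$ (i,j) - g0 $$ (i,j))^2) < \<epsilon> \<longrightarrow>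
           (\<forall>x. dotv N (ymap N (matf w) x) (ymap N (matf w) x) \<ge> 1 / (4 * F) * dotv N x x)"
  proof (intro ballI impI allI)
    fix w x assume w: "w \<in> carrier_mat N N" and close: "(\<Sum>i<N. \<Sum>j<N. (w $$ (i,j) - g0 $$ (i,j))^2) < \<epsilon>"
    let ?D = "\<lambda>i j. g0 $$ (i,j) - w $$ (i,j)"
    have split: "ymap N (matf g0) x i = ymap N (matf w) x i + ymap N ?D x i" for i
      unfolding ymap_def matf_def by (simp add: sum.distrib[symmetric] algebra_simps)
    have "dotv N (ymap N (matf g0) x) (ymap N (matf g0) x)
          \<le> 2 * dotv N (ymap N (matf w) x) (ymap N (matf w) x) + 2 * dotv N (ymap N ?D x) (ymap N ?D x)"
    proof -
      have "dotv N (ymap N (matf g0) x) (ymap N (matf g0) x) = (\<Sum>i<N. (ymap N (matf w) x i + ymap N ?D x i)^2)"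
        unfolding dotv_def split by (simp add: power2_eq_square)
      also have "\<dots> \<le> (\<Sum>i<N. 2 * (ymap N (matf w) x i)^2 + 2 * (ymap N ?D x i)^2)"
      proof (rule sum_mono)
        fix i
        have "0 \<le> (ymap N (matf w) x i - ymap N ?D x i)^2" by simp
        thus "(ymap N (matf w) x i + ymap N ?D x i)^2 \<le> 2 * (ymap N (matf w) x i)^2 + 2 * (ymap N ?D x i)^2"
          by (simp add: power2_eq_square algebra_simps)
      qed
      also have "\<dots> = 2 * dotv N (ymap N (matf w) x) (ymap N (matf w) x) + 2 * dotv N (ymap N ?D x) (ymap N ?D x)"
        unfolding dotv_def by (simp add: sum.distrib sum_distrib_left power2_eq_square)
      finally show ?thesis .
    qed
    moreover have "dotv N (ymap N ?D x) (ymap N ?D x) \<le> \<epsilon> * dotv N x x"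
    proof -
      have "dotv N (ymap N ?D x) (ymap N ?D x) \<le> (\<Sum>i<N. \<Sum>j<N. (?D i j)^2) * dotv N x x" by (rule CS_bound)
      also have "\<dots> \<le> \<epsilon> * dotv N x x"
      proof (rule mult_right_mono[OF _ dotv_nonneg])
        have "(\<Sum>i<N. \<Sum>j<N. (?D i j)^2) = (\<Sum>i<N. \<Sum>j<N. (w $$ (i,j) - g0 $$ (i,j))^2)"
          by (simp add: power2_commute)
        thus "(\<Sum>i<N. \<Sum>j<N. (?D i j)^2) \<le> \<epsilon>" using close by simp
      qed
      finally show ?thesis .
    qed
    ultimately have "(1 / F) * dotv N x x \<le> 2 * dotv N (ymap N (matf w) x) (ymap N (matf w) x) + 2 * (\<epsilon> * dotv N x x)"
      using lb[of x] by linarith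
    hence "2 * dotv N (ymap N (matf w) x) (ymap N (matf w) x) \<ge> (1 / F - 2 * \<epsilon>) * dotv N x x"
      by (simp add: algebra_simps)
    moreover have "1 / F - 2 * \<epsilon> = 2 * (1 / (4 * F))" unfolding \<epsilon>_def using Fpos by (simp add: field_simps)
    ultimately show "dotv N (ymap N (matf w) x) (ymap N (matf w) x) \<ge> 1 / (4 * F) * dotv N x x"
      by simp
  qed
  show ?thesis using epos spos sle key by blast
qed

lemma psi_mult_bound:
  assumes w: "w \<in> carrier_mat N N" and M: "M \<in> carrier_mat N N" and m: "m \<le> N" and s: "\<sigma> \<ge> 0"
    and Y: "\<And>x. dotv N (ymap N (matf w) x) (ymap N (matf w) x) \<ge> \<sigma> * dotv N x x"
  shows "psi N m (w * M) \<ge> \<sigma> ^ m * psi N m M"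
proof -
  have "psi N m (w * M) = gramdet N m (\<lambda>a. ymap N (matf w) (colsv M a))"
    unfolding psi_def
    by (rule gramdet_cong) (use w M m in \<open>auto simp: colsv_def ymap_def matf_def scalar_prod_def atLeast0LessThan\<close>)
  also have "\<dots> \<ge> \<sigma> ^ m * gramdet N m (colsv M)" by (rule gramdet_ymap[OF s Y])
  finally show ?thesis unfolding psi_def .
qed

lemma det_Ints:
  assumes "\<And>i j. i < n \<Longrightarrow> j < n \<Longrightarrow> A $$ (i,j) \<in> \<int>" "A \<in> carrier_mat n n"
  shows "det (A :: real mat) \<in> \<int>"
proof -
  have "det A = (\<Sum>p\<in>{p. p permutes {0..<n}}. signof p * (\<Prod>i = 0..<n. A $$ (i, p i)))"
    using assms(2) unfolding det_def by simp
  also have "\<dots> \<in> \<int>"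
  proof (intro Ints_sum Ints_mult Ints_prod)
    fix p assume "p \<in> {p. p permutes {0..<n}}"
    hence p: "p permutes {0..<n}" by simp
    show "signof p \<in> \<int>" by (simp add: sign_def)
    fix i assume "i \<in> {0..<n}"
    hence "i < n" "p i < n" using p by (auto simp: permutes_in_image)
    thus "A $$ (i, p i) \<in> \<int>" using assms(1) by simp
  qed
  finally show ?thesis .
qed

lemma psi_SLZ:
  assumes d: "\<delta> \<in> SLZ N" and m: "m \<le> N"
  shows "psi N m \<delta> \<ge> 1"
proof -
  have dc: "\<delta> \<in> carrier_mat N N" and dd: "det \<delta> = 1" and di: "\<forall>i<N. \<forall>j<N. \<delta> $$ (i,j) \<in> \<int>"
    using d unfolding SLZ_def SL_def by auto
  have int: "psi N m \<delta> \<in> \<int>"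
    unfolding psi_def gramdet_def
  proof (rule det_Ints[of m])
    fix a b assume "a < m" "b < m"
    hence "a < N" "b < N" using m by auto
    thus "gram N m (colsv \<delta>) $$ (a,b) \<in> \<int>" using \<open>a < m\<close> \<open>b < m\<close> di
      by (auto simp: gram_def dotv_def colsv_def intro!: Ints_sum Ints_mult)
  qed simp
  obtain \<epsilon> \<sigma> where e: "\<epsilon> > 0" and s: "\<sigma> > 0" and H: "\<forall>w \<in> carrier_mat N N.
           (\<Sum>i<N. \<Sum>j<N. (w $$ (i,j) - \<delta> $$ (i,j))^2) < \<epsilon> \<longrightarrow>
           (\<forall>x. dotv N (ymap N (matf w) x) (ymap N (matf w) x) \<ge> \<sigma> * dotv N x x)"
    using local_bound[OF dc] dd by auto
  have "(\<Sum>i<N. \<Sum>j<N. (\<delta> $$ (i,j) - \<delta> $$ (i,j))^2) < \<epsilon>" using e by simp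
  hence Y: "\<And>x. dotv N (ymap N (matf \<delta>) x) (ymap N (matf \<delta>) x) \<ge> \<sigma> * dotv N x x"
    using H dc by blast
  have "psi N m (\<delta> * 1\<^sub>m N) \<ge> \<sigma> ^ m * psi N m (1\<^sub>m N)"
    by (rule psi_mult_bound[OF dc one_carrier_mat m]) (use s Y in auto)
  hence "\<sigma> ^ m \<le> psi N m \<delta>" using dc psi_one[OF m] by simp
  moreover have "\<sigma> ^ m > 0" using s by simp
  ultimately have pos: "psi N m \<delta> > 0" by linarith
  from int obtain z :: int where z: "psi N m \<delta> = of_int z" by (auto elim: Ints_cases)
  with pos have "z \<ge> 1" by simp
  thus ?thesis using z by simp
qed


lemma SL_mult: "a \<in> SL N \<Longrightarrow> b \<in> SL N \<Longrightarrow> a * b \<in> SL N"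
  unfolding SL_def by (auto simp: det_mult)

lemma SL_carrier: "a \<in> SL N \<Longrightarrow> a \<in> carrier_mat N N"
  unfolding SL_def by auto

lemma lcoset_mult:
  assumes G: "mat_subgroup N G" and x: "x \<in> carrier_mat N N" and g: "g \<in> G"
  shows "lcoset G (x * g) = lcoset G x"
proof -
  have Gc: "\<And>a. a \<in> G \<Longrightarrow> a \<in> carrier_mat N N" using G unfolding mat_subgroup_def SL_def by auto
  have Gm: "\<And>a b. a \<in> G \<Longrightarrow> b \<in> G \<Longrightarrow> a * b \<in> G" using G unfolding mat_subgroup_def by auto
  obtain g' where g': "g' \<in> G" "g * g' = 1\<^sub>m N" using G g unfolding mat_subgroup_def by blast
  show ?thesis unfolding lcoset_def
  proof (intro equalityI subsetI)
    fix y assume "y \<in> (\<lambda>h. x * g * h) ` G"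
    then obtain h where h: "h \<in> G" "y = x * g * h" by auto
    hence "y = x * (g * h)" using x Gc[OF g] Gc[OF h(1)] by simp
    thus "y \<in> (\<lambda>h. x * h) ` G" using Gm[OF g h(1)] by auto
  next
    fix y assume "y \<in> (\<lambda>h. x * h) ` G"
    then obtain h where h: "h \<in> G" "y = x * h" by auto
    have "x * g * (g' * h) = x * (g * g') * h"
      using x Gc[OF g] Gc[OF g'(1)] Gc[OF h(1)] by (simp add: assoc_mult_mat[of _ N N _ N _ N])
    also have "\<dots> = y" using g'(2) h x by simp
    finally show "y \<in> (\<lambda>h. x * g * h) ` G" using Gm[OF g'(1) h(1)] by (auto intro!: image_eqI[of _ _ "g' * h"])
  qed
qed

lemma lcoset_eq:
  assumes G: "mat_subgroup N G" and x: "x \<in> carrier_mat N N" and e: "lcoset G x = lcoset G w"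
  shows "\<exists>g\<in>G. x = w * g"
proof -
  have "1\<^sub>m N \<in> G" using G unfolding mat_subgroup_def by auto
  hence "x * 1\<^sub>m N \<in> lcoset G x" unfolding lcoset_def by auto
  hence "x \<in> lcoset G w" using x e by simp
  thus ?thesis unfolding lcoset_def by auto
qed

lemma openin_quot_top:
  "openin (quot_top X f) U \<longleftrightarrow> U \<subseteq> f ` topspace X \<and> openin X {x \<in> topspace X. f x \<in> U}"
  unfolding quot_top_def by (simp add: istopology_quot_top)

lemma topspace_quot_top: "topspace (quot_top X f) = f ` topspace X"
proof
  show "topspace (quot_top X f) \<subseteq> f ` topspace X"
    unfolding topspace_def openin_quot_top by auto
  have e: "{x \<in> topspace X. f x \<in> f ` topspace X} = topspace X" by auto
  have "openin (quot_top X f) (f ` topspace X)" unfolding openin_quot_top e by auto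
  thus "f ` topspace X \<subseteq> topspace (quot_top X f)" by (rule openin_subset)
qed

lemma topspace_G_top: "topspace (G_top N) = SL N"
  unfolding G_top_def topspace_pullback_topology by simp

lemma openin_G_top_ball:
  assumes \<gamma>: "\<gamma> \<in> carrier_mat N N"
  shows "openin (G_top N) {x \<in> SL N. (\<Sum>i<N. \<Sum>j<N. ((x * \<gamma>) $$ (i,j) - g0 $$ (i,j))^2) < \<epsilon>}"
proof -
  define \<Phi> where "\<Phi> f = (\<Sum>i<N. \<Sum>j<N. ((\<Sum>l<N. f (i,l) * \<gamma> $$ (l,j)) - g0 $$ (i,j))^2)" for f :: "nat \<times> nat \<Rightarrow> real"
  have cont: "continuous_map (product_topology (\<lambda>_. euclideanreal) UNIV) euclideanreal \<Phi>"
    unfolding \<Phi>_def by (intro continuous_intros) auto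
  have op: "openin (product_topology (\<lambda>_. euclideanreal) UNIV) {f \<in> topspace (product_topology (\<lambda>_. euclideanreal) UNIV). \<Phi> f \<in> {..<\<epsilon>}}"
    by (rule openin_continuous_map_preimage[OF cont]) simp
  have eq: "{x \<in> SL N. (\<Sum>i<N. \<Sum>j<N. ((x * \<gamma>) $$ (i,j) - g0 $$ (i,j))^2) < \<epsilon>}
      = entries N -` {f \<in> topspace (product_topology (\<lambda>_. euclideanreal) UNIV). \<Phi> f \<in> {..<\<epsilon>}} \<inter> SL N"
  proof -
    have "\<Phi> (entries N x) = (\<Sum>i<N. \<Sum>j<N. ((x * \<gamma>) $$ (i,j) - g0 $$ (i,j))^2)" if x: "x \<in> SL N" for x
    proof -
      have xc: "x \<in> carrier_mat N N" using SL_carrier[OF x] .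
      show ?thesis unfolding \<Phi>_def
      proof (intro sum.cong refl)
        fix i j assume i: "i \<in> {..<N}" and j: "j \<in> {..<N}"
        have "(x * \<gamma>) $$ (i,j) = (\<Sum>l<N. x $$ (i,l) * \<gamma> $$ (l,j))"
          by (rule mult_entry[of _ N N _ N]) (use xc \<gamma> i j in auto)
        moreover have "(\<Sum>l<N. entries N x (i,l) * \<gamma> $$ (l,j)) = (\<Sum>l<N. x $$ (i,l) * \<gamma> $$ (l,j))"
          by (rule sum.cong) (use i in \<open>auto simp: entries_def\<close>)
        ultimately show "((\<Sum>l<N. entries N x (i,l) * \<gamma> $$ (l,j)) - g0 $$ (i,j))^2 = ((x * \<gamma>) $$ (i,j) - g0 $$ (i,j))^2"
          by simp
      qed
    qed
    hence fact: "\<And>x. x \<in> SL N \<Longrightarrow> (\<Phi> (entries N x) < \<epsilon>) = ((\<Sum>i<N. \<Sum>j<N. ((x * \<gamma>) $$ (i,j) - g0 $$ (i,j))^2) < \<epsilon>)"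
      by simp
    show ?thesis
    proof (intro equalityI subsetI)
      fix x assume "x \<in> {x \<in> SL N. (\<Sum>i<N. \<Sum>j<N. ((x * \<gamma>) $$ (i,j) - g0 $$ (i,j))^2) < \<epsilon>}"
      thus "x \<in> entries N -` {f \<in> topspace (product_topology (\<lambda>_. euclideanreal) UNIV). \<Phi> f \<in> {..<\<epsilon>}} \<inter> SL N"
        using fact[of x] by simp
    next
      fix x assume "x \<in> entries N -` {f \<in> topspace (product_topology (\<lambda>_. euclideanreal) UNIV). \<Phi> f \<in> {..<\<epsilon>}} \<inter> SL N"
      thus "x \<in> {x \<in> SL N. (\<Sum>i<N. \<Sum>j<N. ((x * \<gamma>) $$ (i,j) - g0 $$ (i,j))^2) < \<epsilon>}"
        using fact[of x] by simp
    qed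
  qed
  show ?thesis unfolding G_top_def openin_pullback_topology
    by (intro exI[of _ "{f \<in> topspace (product_topology (\<lambda>_. euclideanreal) UNIV). \<Phi> f \<in> {..<\<epsilon>}}"] conjI op eq)
qed

lemma coset_reps:
  assumes H: "mat_subgroup N H" and fi: "finite_index H L" and Lc: "L \<subseteq> carrier_mat N N"
  shows "\<exists>R. finite R \<and> R \<subseteq> L \<and> (\<forall>g\<in>L. \<exists>\<rho>\<in>R. \<exists>h\<in>H. g = \<rho> * h)"
proof -
  let ?C = "(\<lambda>g. (\<lambda>h. g * h) ` H) ` L"
  have fin: "finite ?C" and HL: "H \<subseteq> L" using fi unfolding finite_index_def by auto
  define rep where "rep c = (SOME g. g \<in> L \<and> (\<lambda>h. g * h) ` H = c)" for c
  have rep: "rep c \<in> L \<and> (\<lambda>h. rep c * h) ` H = c" if "c \<in> ?C" for c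
    unfolding rep_def by (rule someI_ex) (use that in auto)
  have one: "1\<^sub>m N \<in> H" using H unfolding mat_subgroup_def by auto
  have Hc: "\<And>a. a \<in> H \<Longrightarrow> a \<in> carrier_mat N N" using H unfolding mat_subgroup_def SL_def by auto
  show ?thesis
  proof (intro exI[of _ "rep ` ?C"] conjI ballI)
    show "finite (rep ` ?C)" using fin by simp
    show "rep ` ?C \<subseteq> L" using rep by auto
    fix g assume g: "g \<in> L"
    let ?c = "(\<lambda>h. g * h) ` H"
    have c: "?c \<in> ?C" using g by auto
    have "g * 1\<^sub>m N \<in> ?c" using one by auto
    hence "g * 1\<^sub>m N \<in> (\<lambda>h. rep ?c * h) ` H" using rep[OF c] by simp
    then obtain h where h: "h \<in> H" "g * 1\<^sub>m N = rep ?c * h" by auto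
    have "g * 1\<^sub>m N = g" using g Lc by auto
    hence e: "g = rep ?c * h" using h(2) by simp
    have r: "rep ?c \<in> rep ` ?C" using c by (rule imageI)
    show "\<exists>\<rho>\<in>rep ` ?C. \<exists>h\<in>H. g = \<rho> * h"
      using e r h(1) by blast
  qed
qed


lemma lower_bound:
  fixes Gi :: "real mat set"
  assumes G: "mat_subgroup N Gi"
    and Rf: "finite R" and RSL: "R \<subseteq> SL N" and Rd: "\<forall>\<gamma>\<in>Gi. \<exists>\<rho>\<in>R. \<exists>\<delta>\<in>SLZ N. \<gamma> = \<rho> * \<delta>"
    and B: "compactin (quot_top (G_top N) (lcoset Gi)) B"
  shows "\<exists>c>0. \<forall>g\<in>carrier_mat N N. lcoset Gi g \<in> B \<longrightarrow> (\<forall>m\<le>N. psi N m g \<ge> c)"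
proof -
  let ?Q = "quot_top (G_top N) (lcoset Gi)"
  have GSL: "Gi \<subseteq> SL N" using G unfolding mat_subgroup_def by auto
  define P where "P g0 \<epsilon> \<sigma> \<longleftrightarrow> \<epsilon> > 0 \<and> \<sigma> > 0 \<and> \<sigma> \<le> 1 \<and> (\<forall>w\<in>carrier_mat N N.
      (\<Sum>i<N. \<Sum>j<N. (w $$ (i,j) - g0 $$ (i,j))^2) < \<epsilon> \<longrightarrow>
      (\<forall>x. dotv N (ymap N (matf w) x) (ymap N (matf w) x) \<ge> \<sigma> * dotv N x x))" for g0 \<epsilon> \<sigma>
  have ex: "\<forall>g0\<in>SL N. \<exists>p. P g0 (fst p) (snd p)"
  proof
    fix g0 assume g0: "g0 \<in> SL N"
    have "g0 \<in> carrier_mat N N" "det g0 \<noteq> 0" using g0 unfolding SL_def by auto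
    from local_bound[OF this] obtain \<epsilon> \<sigma> where "P g0 \<epsilon> \<sigma>" unfolding P_def by blast
    thus "\<exists>p. P g0 (fst p) (snd p)" by (intro exI[of _ "(\<epsilon>, \<sigma>)"]) simp
  qed
  obtain pf where pf: "\<forall>g0\<in>SL N. P g0 (fst (pf g0)) (snd (pf g0))" using bchoice[OF ex] by blast
  define \<epsilon> where "\<epsilon> g0 = fst (pf g0)" for g0
  define \<sigma> where "\<sigma> g0 = snd (pf g0)" for g0
  have Pg: "P g0 (\<epsilon> g0) (\<sigma> g0)" if "g0 \<in> SL N" for g0 using pf that unfolding \<epsilon>_def \<sigma>_def by blast
  define W where "W g0 = {x \<in> SL N. (\<Sum>i<N. \<Sum>j<N. ((x * 1\<^sub>m N) $$ (i,j) - g0 $$ (i,j))^2) < \<epsilon> g0}" for g0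
  define V where "V g0 = lcoset Gi ` W g0" for g0
  have openV: "openin ?Q (V g0)" if g0: "g0 \<in> SL N" for g0
  proof -
    have pre: "{x \<in> topspace (G_top N). lcoset Gi x \<in> V g0}
        = \<Union> ((\<lambda>\<gamma>. {x \<in> SL N. (\<Sum>i<N. \<Sum>j<N. ((x * \<gamma>) $$ (i,j) - g0 $$ (i,j))^2) < \<epsilon> g0}) ` Gi)"
    proof (intro equalityI subsetI)
      fix x assume "x \<in> {x \<in> topspace (G_top N). lcoset Gi x \<in> V g0}"
      hence x: "x \<in> SL N" "lcoset Gi x \<in> V g0" unfolding topspace_G_top by auto
      then obtain w where w: "w \<in> W g0" "lcoset Gi x = lcoset Gi w" unfolding V_def by auto
      have wSL: "w \<in> SL N" using w(1) unfolding W_def by auto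
      obtain \<gamma> where \<gamma>: "\<gamma> \<in> Gi" "w = x * \<gamma>"
        using lcoset_eq[OF G SL_carrier[OF wSL] w(2)[symmetric]] by blast
      have "w * 1\<^sub>m N = x * \<gamma>" using \<gamma>(2) right_mult_one_mat[OF SL_carrier[OF wSL]] by simp
      hence "(\<Sum>i<N. \<Sum>j<N. ((x * \<gamma>) $$ (i,j) - g0 $$ (i,j))^2) < \<epsilon> g0" using w(1) unfolding W_def by auto
      thus "x \<in> \<Union> ((\<lambda>\<gamma>. {x \<in> SL N. (\<Sum>i<N. \<Sum>j<N. ((x * \<gamma>) $$ (i,j) - g0 $$ (i,j))^2) < \<epsilon> g0}) ` Gi)"
        using \<gamma>(1) x(1) by blast
    next
      fix x assume "x \<in> \<Union> ((\<lambda>\<gamma>. {x \<in> SL N. (\<Sum>i<N. \<Sum>j<N. ((x * \<gamma>) $$ (i,j) - g0 $$ (i,j))^2) < \<epsilon> g0}) ` Gi)"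
      then obtain \<gamma> where \<gamma>: "\<gamma> \<in> Gi" "x \<in> SL N" "(\<Sum>i<N. \<Sum>j<N. ((x * \<gamma>) $$ (i,j) - g0 $$ (i,j))^2) < \<epsilon> g0"
        by blast
      have xg: "x * \<gamma> \<in> SL N" using SL_mult[OF \<gamma>(2)] GSL \<gamma>(1) by auto
      have "x * \<gamma> * 1\<^sub>m N = x * \<gamma>" by (rule right_mult_one_mat[OF SL_carrier[OF xg]])
      hence "x * \<gamma> \<in> W g0" unfolding W_def using xg \<gamma>(3) by simp
      moreover have "lcoset Gi (x * \<gamma>) = lcoset Gi x" by (rule lcoset_mult[OF G SL_carrier[OF \<gamma>(2)] \<gamma>(1)])
      ultimately have "lcoset Gi x \<in> V g0" unfolding V_def by (metis image_eqI)
      thus "x \<in> {x \<in> topspace (G_top N). lcoset Gi x \<in> V g0}" using \<gamma>(2) unfolding topspace_G_top by simp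
    qed
    have "openin (G_top N) {x \<in> topspace (G_top N). lcoset Gi x \<in> V g0}"
      unfolding pre
    proof (rule openin_Union, clarify)
      fix \<gamma> assume "\<gamma> \<in> Gi"
      hence "\<gamma> \<in> carrier_mat N N" using GSL SL_carrier by blast
      thus "openin (G_top N) {x \<in> SL N. (\<Sum>i<N. \<Sum>j<N. ((x * \<gamma>) $$ (i,j) - g0 $$ (i,j))^2) < \<epsilon> g0}"
        by (rule openin_G_top_ball)
    qed
    moreover have "V g0 \<subseteq> lcoset Gi ` topspace (G_top N)"
      unfolding V_def W_def topspace_G_top by auto
    ultimately show ?thesis unfolding openin_quot_top by simp
  qed
  have BQ: "B \<subseteq> topspace ?Q" using B by (rule compactin_subset_topspace)
  have cover: "B \<subseteq> \<Union> (V ` SL N)"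
  proof
    fix y assume "y \<in> B"
    hence "y \<in> lcoset Gi ` SL N" using BQ unfolding topspace_quot_top topspace_G_top by auto
    then obtain g0 where g0: "g0 \<in> SL N" "y = lcoset Gi g0" by auto
    have "g0 * 1\<^sub>m N = g0" by (rule right_mult_one_mat[OF SL_carrier[OF g0(1)]])
    hence "g0 \<in> W g0" unfolding W_def using g0(1) Pg[OF g0(1)] by (simp add: P_def)
    thus "y \<in> \<Union> (V ` SL N)" unfolding V_def using g0 by blast
  qed
  obtain F where F: "finite F" "F \<subseteq> V ` SL N" "B \<subseteq> \<Union> F"
    using B cover openV unfolding compactin_def by (metis (no_types, lifting) imageE)
  obtain G0 where G0: "G0 \<subseteq> SL N" "finite G0" "F = V ` G0"
    using finite_subset_image[OF F(1) F(2)] by blast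
  define \<sigma>0 where "\<sigma>0 = Min (insert 1 (\<sigma> ` (G0 \<union> R)))"
  have fin: "finite (insert 1 (\<sigma> ` (G0 \<union> R)))" using G0 Rf by simp
  have s0pos: "\<sigma>0 > 0"
    unfolding \<sigma>0_def using fin Pg G0(1) RSL by (subst Min_gr_iff) (auto simp: P_def)
  have s0le1: "\<sigma>0 \<le> 1" unfolding \<sigma>0_def using fin by simp
  have s0le: "\<sigma>0 \<le> \<sigma> g" if "g \<in> G0 \<union> R" for g unfolding \<sigma>0_def using fin that by simp
  show ?thesis
  proof (intro exI[of _ "\<sigma>0 ^ (2 * N)"] conjI ballI impI allI)
    show "\<sigma>0 ^ (2 * N) > 0" using s0pos by simp
    fix g m assume g: "g \<in> carrier_mat N N" and gB: "lcoset Gi g \<in> B" and m: "m \<le> N"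
    obtain g0 where g0: "g0 \<in> G0" "lcoset Gi g \<in> V g0" using gB F(3) G0(3) by blast
    have g0SL: "g0 \<in> SL N" using g0(1) G0(1) by auto
    obtain w where w: "w \<in> W g0" "lcoset Gi g = lcoset Gi w" using g0(2) unfolding V_def by auto
    have wSL: "w \<in> SL N" using w(1) unfolding W_def by auto
    have wc: "w \<in> carrier_mat N N" using SL_carrier[OF wSL] .
    obtain \<gamma> where \<gamma>: "\<gamma> \<in> Gi" "g = w * \<gamma>" using lcoset_eq[OF G g w(2)] by blast
    obtain \<rho> \<delta> where \<rho>: "\<rho> \<in> R" "\<delta> \<in> SLZ N" "\<gamma> = \<rho> * \<delta>" using Rd \<gamma>(1) by blast
    have \<rho>SL: "\<rho> \<in> SL N" using \<rho>(1) RSL by auto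
    have \<rho>c: "\<rho> \<in> carrier_mat N N" using SL_carrier[OF \<rho>SL] .
    have \<delta>c: "\<delta> \<in> carrier_mat N N" using \<rho>(2) unfolding SLZ_def SL_def by auto
    have wclose: "(\<Sum>i<N. \<Sum>j<N. (w $$ (i,j) - g0 $$ (i,j))^2) < \<epsilon> g0"
      using w(1) wc unfolding W_def by simp
    have Yw: "\<And>x. dotv N (ymap N (matf w) x) (ymap N (matf w) x) \<ge> \<sigma> g0 * dotv N x x"
      using Pg[OF g0SL] wc wclose unfolding P_def by blast
    have Y\<rho>: "\<And>x. dotv N (ymap N (matf \<rho>) x) (ymap N (matf \<rho>) x) \<ge> \<sigma> \<rho> * dotv N x x"
      using Pg[OF \<rho>SL] \<rho>c unfolding P_def by auto
    have sg0: "\<sigma> g0 \<ge> \<sigma>0" "\<sigma> \<rho> \<ge> \<sigma>0" using s0le g0(1) \<rho>(1) by auto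
    have "\<sigma>0 ^ (2 * N) \<le> \<sigma>0 ^ (2 * m)"
      by (rule power_decreasing) (use m s0pos s0le1 in auto)
    also have "\<dots> = \<sigma>0 ^ m * \<sigma>0 ^ m" by (simp add: power_add[symmetric] mult_2)
    also have "\<dots> \<le> \<sigma> g0 ^ m * (\<sigma> \<rho> ^ m * 1)"
      by (simp, intro mult_mono power_mono) (use sg0 s0pos in auto)
    also have "\<dots> \<le> \<sigma> g0 ^ m * (\<sigma> \<rho> ^ m * psi N m \<delta>)"
      by (intro mult_left_mono psi_SLZ[OF \<rho>(2) m]) (use sg0 s0pos in auto)
    also have "\<dots> \<le> \<sigma> g0 ^ m * psi N m (\<rho> * \<delta>)"
      by (intro mult_left_mono psi_mult_bound[OF \<rho>c \<delta>c m _ Y\<rho>]) (use sg0 s0pos in auto)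
    also have "\<dots> \<le> psi N m (w * (\<rho> * \<delta>))"
      by (rule psi_mult_bound[OF wc _ m _ Yw]) (use \<rho>c \<delta>c sg0 s0pos in auto)
    also have "w * (\<rho> * \<delta>) = g" using \<gamma>(2) \<rho>(3) by simp
    finally show "\<sigma>0 ^ (2 * N) \<le> psi N m g" .
  qed
qed


lemma conj_subgroup:
  fixes q :: "real mat"
  assumes \<Gamma>: "mat_subgroup N \<Gamma>" and \<Gamma>': "mat_subgroup N \<Gamma>'" and sub: "\<Gamma>' \<subseteq> \<Gamma>" and q: "q \<in> \<Gamma>"
  shows "mat_subgroup N {qi * \<gamma> * q | qi \<gamma>. qi \<in> carrier_mat N N \<and> qi * q = 1\<^sub>m N \<and> \<gamma> \<in> \<Gamma>'}
         \<and> {qi * \<gamma> * q | qi \<gamma>. qi \<in> carrier_mat N N \<and> qi * q = 1\<^sub>m N \<and> \<gamma> \<in> \<Gamma>'} \<subseteq> \<Gamma>"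
proof -
  have \<Gamma>SL: "\<Gamma> \<subseteq> SL N" and \<Gamma>1: "1\<^sub>m N \<in> \<Gamma>" and \<Gamma>m: "\<And>a b. a \<in> \<Gamma> \<Longrightarrow> b \<in> \<Gamma> \<Longrightarrow> a * b \<in> \<Gamma>"
    and \<Gamma>i: "\<And>a. a \<in> \<Gamma> \<Longrightarrow> \<exists>b\<in>\<Gamma>. a * b = 1\<^sub>m N \<and> b * a = 1\<^sub>m N"
    using \<Gamma> unfolding mat_subgroup_def by auto
  have \<Gamma>'1: "1\<^sub>m N \<in> \<Gamma>'" and \<Gamma>'m: "\<And>a b. a \<in> \<Gamma>' \<Longrightarrow> b \<in> \<Gamma>' \<Longrightarrow> a * b \<in> \<Gamma>'"
    and \<Gamma>'i: "\<And>a. a \<in> \<Gamma>' \<Longrightarrow> \<exists>b\<in>\<Gamma>'. a * b = 1\<^sub>m N \<and> b * a = 1\<^sub>m N"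
    using \<Gamma>' unfolding mat_subgroup_def by auto
  have c: "\<And>a. a \<in> \<Gamma> \<Longrightarrow> a \<in> carrier_mat N N" using \<Gamma>SL unfolding SL_def by auto
  obtain qv where qv: "qv \<in> \<Gamma>" "q * qv = 1\<^sub>m N" "qv * q = 1\<^sub>m N" using \<Gamma>i[OF q] by blast
  have qc: "q \<in> carrier_mat N N" and qvc: "qv \<in> carrier_mat N N" using c q qv(1) by auto
  have eq: "{qi * \<gamma> * q | qi \<gamma>. qi \<in> carrier_mat N N \<and> qi * q = 1\<^sub>m N \<and> \<gamma> \<in> \<Gamma>'} = (\<lambda>\<gamma>. qv * \<gamma> * q) ` \<Gamma>'"
  proof -
    have "qi = qv" if "qi \<in> carrier_mat N N" "qi * q = 1\<^sub>m N" for qi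
    proof -
      have e: "(qi * q) * qv = qi * (q * qv)" by (rule assoc_mult_mat[OF that(1) qc qvc])
      have "(qi * q) * qv = qv" using that(2) qvc by simp
      moreover have "qi * (q * qv) = qi" using qv(2) that(1) by simp
      ultimately show ?thesis using e by simp
    qed
    thus ?thesis using qvc qv(3) by blast
  qed
  have prod_form: "(qv * a * q) * (qv * b * q) = qv * (a * b) * q" if "a \<in> carrier_mat N N" "b \<in> carrier_mat N N" for a b
  proof -
    have "(qv * a * q) * (qv * b * q) = qv * a * (q * qv) * b * q"
      using that qc qvc by (simp add: assoc_mult_mat[of _ N N _ N _ N])
    also have "\<dots> = qv * (a * b) * q" using that qc qvc qv(2) by (simp add: assoc_mult_mat[of _ N N _ N _ N])
    finally show ?thesis .
  qed
  have inG: "qv * \<gamma> * q \<in> \<Gamma>" if "\<gamma> \<in> \<Gamma>'" for \<gamma>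
    using \<Gamma>m[OF \<Gamma>m[OF qv(1)] q] sub that by blast
  have "mat_subgroup N ((\<lambda>\<gamma>. qv * \<gamma> * q) ` \<Gamma>')"
    unfolding mat_subgroup_def
  proof (intro conjI ballI)
    show "(\<lambda>\<gamma>. qv * \<gamma> * q) ` \<Gamma>' \<subseteq> SL N" using inG \<Gamma>SL by blast
    have "qv * 1\<^sub>m N * q = 1\<^sub>m N" using qvc qv(3) by simp
    thus "1\<^sub>m N \<in> (\<lambda>\<gamma>. qv * \<gamma> * q) ` \<Gamma>'" using \<Gamma>'1 by (metis image_eqI)
  next
    fix g h assume "g \<in> (\<lambda>\<gamma>. qv * \<gamma> * q) ` \<Gamma>'" "h \<in> (\<lambda>\<gamma>. qv * \<gamma> * q) ` \<Gamma>'"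
    then obtain a b where ab: "a \<in> \<Gamma>'" "b \<in> \<Gamma>'" "g = qv * a * q" "h = qv * b * q" by blast
    have "g * h = qv * (a * b) * q" using prod_form c sub ab by blast
    thus "g * h \<in> (\<lambda>\<gamma>. qv * \<gamma> * q) ` \<Gamma>'" using \<Gamma>'m[OF ab(1,2)] by blast
  next
    fix g assume "g \<in> (\<lambda>\<gamma>. qv * \<gamma> * q) ` \<Gamma>'"
    then obtain a where a: "a \<in> \<Gamma>'" "g = qv * a * q" by blast
    obtain a' where a': "a' \<in> \<Gamma>'" "a * a' = 1\<^sub>m N" "a' * a = 1\<^sub>m N" using \<Gamma>'i[OF a(1)] by blast
    have ac: "a \<in> carrier_mat N N" "a' \<in> carrier_mat N N" using c sub a(1) a'(1) by auto
    have "g * (qv * a' * q) = 1\<^sub>m N" using prod_form[OF ac] a a'(2) qvc qv(3) by simp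
    moreover have "(qv * a' * q) * g = 1\<^sub>m N" using prod_form[OF ac(2,1)] a a'(3) qvc qv(3) by simp
    ultimately show "\<exists>h\<in>(\<lambda>\<gamma>. qv * \<gamma> * q) ` \<Gamma>'. g * h = 1\<^sub>m N \<and> h * g = 1\<^sub>m N"
      using a'(1) by blast
  qed
  moreover have "(\<lambda>\<gamma>. qv * \<gamma> * q) ` \<Gamma>' \<subseteq> \<Gamma>" using inG by blast
  ultimately show ?thesis unfolding eq by simp
qed


lemma diag_mult_entry:
  assumes a: "a \<in> carrier_mat N N" "diagonal_mat a" and b: "b \<in> carrier_mat N N" "diagonal_mat b"
    and i: "i < N" and j: "j < N"
  shows "(a * b) $$ (i,j) = (if i = j then a $$ (i,i) * b $$ (i,i) else 0)"
proof -
  have "(a * b) $$ (i,j) = (\<Sum>l<N. a $$ (i,l) * b $$ (l,j))" by (rule mult_entry[OF a(1) b(1) i j])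
  also have "\<dots> = (\<Sum>l<N. if l = i then a $$ (i,i) * b $$ (i,j) else 0)"
    by (rule sum.cong) (use a i in \<open>auto simp: diagonal_mat_def\<close>)
  also have "\<dots> = a $$ (i,i) * b $$ (i,j)" using i by simp
  finally show ?thesis using b j i by (auto simp: diagonal_mat_def)
qed

lemma det_diag:
  assumes "d \<in> carrier_mat N N" "diagonal_mat d"
  shows "det d = (\<Prod>i<N. d $$ (i,i))"
proof -
  have "det d = prod_list (diag_mat d)"
    by (rule det_upper_triangular[OF _ assms(1)]) (use assms in \<open>auto simp: upper_triangular_def diagonal_mat_def\<close>)
  thus ?thesis unfolding prod_list_diag_prod using assms(1) by (simp add: atLeast0LessThan)
qed

theorem lemma4p12:
  fixes N :: nat and ns :: "nat list"
    and \<Gamma> \<Gamma>' :: "real mat set" and q :: "real mat" and B :: "real mat set set"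
  assumes "N \<ge> 2"
    and "valid_blocks N ns"
    and "mat_subgroup N \<Gamma>" and "commensurable N \<Gamma> (SLZ N)"
    and "mat_subgroup N \<Gamma>'" and "finite_index \<Gamma>' \<Gamma>" and "neat \<Gamma>'"
    and "q \<in> \<Gamma>"
    and "compactin (quotient_space N {qi * \<gamma> * q | qi \<gamma>. qi \<in> carrier_mat N N \<and> qi * q = 1\<^sub>m N \<and> \<gamma> \<in> \<Gamma>'}) B"
  shows "\<exists>C<0. \<forall>k\<in>SO N. \<forall>a\<in>A_plus_M N ns. \<forall>b\<in>A_blk N ns.
           log_diag N a + log_diag N b \<notin> cone_C N ns C \<longrightarrow>
           lcoset {qi * \<gamma> * q | qi \<gamma>. qi \<in> carrier_mat N N \<and> qi * q = 1\<^sub>m N \<and> \<gamma> \<in> \<Gamma>'} ` {k * a * b * h | h. h \<in> G_hor N ns} \<inter> B = {}"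
proof -
  let ?Gi = "{qi * \<gamma> * q | qi \<gamma>. qi \<in> carrier_mat N N \<and> qi * q = 1\<^sub>m N \<and> \<gamma> \<in> \<Gamma>'}"
  note vb = assms(2)
  have sub: "\<Gamma>' \<subseteq> \<Gamma>" using assms(6) unfolding finite_index_def by auto
  have Gi: "mat_subgroup N ?Gi" "?Gi \<subseteq> \<Gamma>"
    using conj_subgroup[OF assms(3) assms(5) sub assms(8)] by auto
  have \<Gamma>SL: "\<Gamma> \<subseteq> SL N" using assms(3) unfolding mat_subgroup_def by auto
  have \<Gamma>c: "\<Gamma> \<subseteq> carrier_mat N N" using \<Gamma>SL unfolding SL_def by auto
  have H: "mat_subgroup N (\<Gamma> \<inter> SLZ N)" "finite_index (\<Gamma> \<inter> SLZ N) \<Gamma>"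
    using assms(4) unfolding commensurable_def by auto
  obtain R where R: "finite R" "R \<subseteq> \<Gamma>" "\<forall>g\<in>\<Gamma>. \<exists>\<rho>\<in>R. \<exists>h\<in>\<Gamma> \<inter> SLZ N. g = \<rho> * h"
    using coset_reps[OF H \<Gamma>c] by blast
  have Rd: "\<forall>\<gamma>\<in>?Gi. \<exists>\<rho>\<in>R. \<exists>\<delta>\<in>SLZ N. \<gamma> = \<rho> * \<delta>"
    using R(3) Gi(2) by blast
  have Bc: "compactin (quot_top (G_top N) (lcoset ?Gi)) B"
    using assms(9) unfolding quotient_space_def .
  obtain c0 where c0: "c0 > 0" and LB: "\<forall>g\<in>carrier_mat N N. lcoset ?Gi g \<in> B \<longrightarrow> (\<forall>m\<le>N. psi N m g \<ge> c0)"
    using lower_bound[OF Gi(1) R(1) _ Rd Bc] R(2) \<Gamma>SL by blast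
  define C where "C = min (-1) (ln c0 / 2 - 1)"
  have Cneg: "C < 0" unfolding C_def by simp
  show ?thesis
  proof (intro exI[of _ C] conjI Cneg ballI impI)
    fix k a b assume k: "k \<in> SO N" and a: "a \<in> A_plus_M N ns" and b: "b \<in> A_blk N ns"
      and nc: "log_diag N a + log_diag N b \<notin> cone_C N ns C"
    have ac: "a \<in> carrier_mat N N" "diagonal_mat a" "\<And>i. i < N \<Longrightarrow> a $$ (i,i) > 0"
      and ablk: "\<And>j. j < length ns \<Longrightarrow> (\<Prod>i\<in>block ns j. a $$ (i,i)) = 1"
      and aord: "\<And>i j. i < N \<Longrightarrow> j < N \<Longrightarrow> i < j \<Longrightarrow> same_block ns i j \<Longrightarrow> a $$ (i,i) \<ge> a $$ (j,j)"
      using a unfolding A_plus_M_def pos_diag_def by auto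
    have bc: "b \<in> carrier_mat N N" "diagonal_mat b" "\<And>i. i < N \<Longrightarrow> b $$ (i,i) > 0" "det b = 1"
      and bblk: "\<And>i j. i < N \<Longrightarrow> j < N \<Longrightarrow> same_block ns i j \<Longrightarrow> b $$ (i,i) = b $$ (j,j)"
      using b unfolding A_blk_def pos_diag_def by auto
    have kc: "k \<in> carrier_mat N N" using SO_carrier[OF k] .
    let ?x = "log_diag N a + log_diag N b"
    have xc: "?x \<in> carrier_mat N N" unfolding log_diag_def by simp
    have xe: "?x $$ (i,j) = (if i = j then ln (a $$ (i,i)) + ln (b $$ (i,i)) else 0)" if "i < N" "j < N" for i j
      using that unfolding log_diag_def mat_diag_def by simp
    have trace: "(\<Sum>i<N. ?x $$ (i,i)) = 0"
    proof -
      have "(\<Sum>i<N. ?x $$ (i,i)) = (\<Sum>i<N. ln (a $$ (i,i))) + (\<Sum>i<N. ln (b $$ (i,i)))"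
        by (simp add: xe sum.distrib)
      also have "(\<Sum>i<N. ln (a $$ (i,i))) = ln (\<Prod>i<N. a $$ (i,i))"
      proof (rule ln_prod[symmetric])
        fix i assume "i \<in> {..<N}"
        hence "i < N" by simp
        from ac(3)[OF this] show "a $$ (i,i) \<noteq> 0" by simp
      qed simp
      also have "(\<Prod>i<N. a $$ (i,i)) = 1"
      proof -
        have "(\<Prod>i<N. a $$ (i,i)) = (\<Prod>i<blockstart ns (length ns). a $$ (i,i))"
          using blockstart_length[OF vb] by simp
        also have "\<dots> = (\<Prod>j<length ns. \<Prod>i\<in>block ns j. a $$ (i,i))" by (rule prod_blocks)
        also have "\<dots> = 1" by (rule prod.neutral) (use ablk in auto)
        finally show ?thesis .
      qed
      also have "(\<Sum>i<N. ln (b $$ (i,i))) = ln (\<Prod>i<N. b $$ (i,i))"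
      proof (rule ln_prod[symmetric])
        fix i assume "i \<in> {..<N}"
        hence "i < N" by simp
        from bc(3)[OF this] show "b $$ (i,i) \<noteq> 0" by simp
      qed simp
      also have "(\<Prod>i<N. b $$ (i,i)) = 1" using det_diag[OF bc(1,2)] bc(4) by simp
      finally show ?thesis by simp
    qed
    obtain j where j: "1 \<le> j" "j < length ns" and js: "(\<Sum>i<blockstart ns j. ?x $$ (i,i)) < C"
    proof -
      have "\<not> (\<forall>k. 1 \<le> k \<and> k < length ns \<longrightarrow> (\<Sum>i<blockstart ns k. ?x $$ (i,i)) \<ge> C)"
      proof
        assume all: "\<forall>k. 1 \<le> k \<and> k < length ns \<longrightarrow> (\<Sum>i<blockstart ns k. ?x $$ (i,i)) \<ge> C"
        have diag: "diagonal_mat ?x" unfolding diagonal_mat_def log_diag_def mat_diag_def by simp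
        have mono: "\<forall>i<N. \<forall>j<N. i < j \<and> same_block ns i j \<longrightarrow> ?x $$ (i,i) - ?x $$ (j,j) \<ge> max 0 C"
        proof (intro allI impI)
          fix i j assume ij: "i < N" "j < N" "i < j \<and> same_block ns i j"
          have "ln (a $$ (j,j)) \<le> ln (a $$ (i,i))"
            using aord[of i j] ij ac(3)[of i] ac(3)[of j] by simp
          moreover have "b $$ (i,i) = b $$ (j,j)" using bblk ij by auto
          ultimately show "?x $$ (i,i) - ?x $$ (j,j) \<ge> max 0 C" using xe ij Cneg by simp
        qed
        have "?x \<in> cone_C N ns C" unfolding cone_C_def using xc diag trace mono all by blast
        thus False using nc by simp
      qed
      thus ?thesis using that by force
    qed
    define m where "m = blockstart ns j"
    have m: "m \<le> N" unfolding m_def using blockstart_le[OF vb] j by simp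
    have ab: "a * b \<in> carrier_mat N N" using ac bc by simp
    have abd: "diagonal_mat (a * b)"
      unfolding diagonal_mat_def using diag_mult_entry[OF ac(1,2) bc(1,2)] ac(1) bc(1) by auto
    have psi_val: "psi N m (k * a * b * h) = (\<Prod>i<m. a $$ (i,i) * b $$ (i,i))^2" if h: "h \<in> G_hor N ns" for h
    proof -
      have kab: "k * a * b \<in> carrier_mat N N" using kc ac bc by simp
      have e1: "psi N m (k * a * b * h) = psi N m (k * a * b)"
        unfolding m_def by (rule Ghor_psi[OF vb j(2) h kab])
      have e2: "k * a * b = k * (a * b)" using kc ac(1) bc(1) by simp
      have e3: "psi N m (k * (a * b)) = psi N m (a * b)" by (rule psi_left_orth[OF k ab m])
      have "psi N m (k * a * b * h) = psi N m (a * b)" using e1 e2 e3 by simp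
      also have "\<dots> = (\<Prod>i<m. ((a * b) $$ (i,i))^2)" by (rule psi_diag[OF ab abd m])
      also have "\<dots> = (\<Prod>i<m. (a $$ (i,i) * b $$ (i,i))^2)"
        by (rule prod.cong) (use m diag_mult_entry[OF ac(1,2) bc(1,2)] in auto)
      also have "\<dots> = (\<Prod>i<m. a $$ (i,i) * b $$ (i,i))^2" by (simp add: prod_power_distrib)
      finally show ?thesis .
    qed
    have small: "(\<Prod>i<m. a $$ (i,i) * b $$ (i,i))^2 < c0"
    proof -
      have pos: "\<And>i. i < m \<Longrightarrow> a $$ (i,i) * b $$ (i,i) > 0" using ac(3) bc(3) m by simp
      have "ln (\<Prod>i<m. a $$ (i,i) * b $$ (i,i)) = (\<Sum>i<m. ln (a $$ (i,i) * b $$ (i,i)))"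
      proof (rule ln_prod)
        fix i assume "i \<in> {..<m}"
        hence "i < m" by simp
        from pos[OF this] show "a $$ (i,i) * b $$ (i,i) \<noteq> 0" by linarith
      qed simp
      also have "\<dots> = (\<Sum>i<m. ?x $$ (i,i))"
      proof (rule sum.cong[OF refl])
        fix i assume "i \<in> {..<m}"
        hence iN: "i < N" using m by simp
        have "ln (a $$ (i,i) * b $$ (i,i)) = ln (a $$ (i,i)) + ln (b $$ (i,i))"
          using ac(3)[OF iN] bc(3)[OF iN] by (simp add: ln_mult)
        thus "ln (a $$ (i,i) * b $$ (i,i)) = ?x $$ (i,i)" using xe[OF iN iN] by simp
      qed
      also have "\<dots> < C" using js unfolding m_def .
      finally have lt: "ln (\<Prod>i<m. a $$ (i,i) * b $$ (i,i)) < C" .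
      have P0: "(\<Prod>i<m. a $$ (i,i) * b $$ (i,i)) > 0" by (rule prod_pos) (use pos in auto)
      have "(\<Prod>i<m. a $$ (i,i) * b $$ (i,i)) = exp (ln (\<Prod>i<m. a $$ (i,i) * b $$ (i,i)))" using P0 by simp
      also have "\<dots> < exp C" using lt by simp
      finally have Pl: "(\<Prod>i<m. a $$ (i,i) * b $$ (i,i)) < exp C" .
      have "(\<Prod>i<m. a $$ (i,i) * b $$ (i,i))^2 < (exp C)^2" by (rule power_strict_mono[OF Pl less_imp_le[OF P0]]) simp
      also have "(exp C)^2 = exp (2 * C)"
      proof -
        have "exp (C + C) = exp C * exp C" by (rule exp_add)
        moreover have "C + C = 2 * C" by simp
        ultimately show ?thesis by (simp add: power2_eq_square)
      qed
      also have "exp (2 * C) \<le> exp (ln c0 - 2)"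
      proof -
        have "C \<le> ln c0 / 2 - 1" unfolding C_def by (rule min.cobounded2)
        hence "2 * C \<le> ln c0 - 2" by linarith
        thus ?thesis by simp
      qed
      also have "exp (ln c0 - 2) = c0 / exp 2" using c0 by (simp add: exp_diff)
      also have "\<dots> < c0 / 1"
        by (rule divide_strict_left_mono) (use c0 in auto)
      also have "c0 / 1 = c0" by simp
      finally show ?thesis .
    qed
    show "lcoset ?Gi ` {k * a * b * h | h. h \<in> G_hor N ns} \<inter> B = {}"
    proof (rule ccontr)
      assume "lcoset ?Gi ` {k * a * b * h | h. h \<in> G_hor N ns} \<inter> B \<noteq> {}"
      then obtain h where h: "h \<in> G_hor N ns" and inB: "lcoset ?Gi (k * a * b * h) \<in> B" by blast
      note hh = CollectD[OF h[unfolded G_hor_def Let_def]]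
      have "h \<in> SL N" by (rule conjunct1[OF hh])
      hence hc: "h \<in> carrier_mat N N" by (rule SL_carrier)
      have "k * a * b * h \<in> carrier_mat N N"
        by (intro mult_carrier_mat[of _ N N _ N] kc ac(1) bc(1) hc)
      hence "psi N m (k * a * b * h) \<ge> c0" using LB inB m by (meson)
      thus False using psi_val[OF h] small by linarith
    qed
  qed
qed

end
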